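(* Let $d_0=65$, $\gamma_1=18$, $\gamma_2=13$, let $n\ge d_0+4$, and let $\mathcal{H}$ be a $[3]$-graph on $n$ vertices such that every pair of non-adjacent vertices $u,v$ satisfies $d_{\partial\mathcal{H}}(u)+d_{\partial\mathcal{H}}(v)\ge n+d_0$. Let $\mathcal{C}=v_1,e_1,\dots,v_\ell,e_\ell,v_1$ be a maximal Berge cycle in $\mathcal{H}$ with $\ell=|V(\mathcal{C})|\in\{n-1,n-2,n-3\}$. Then for every $u\in V(\mathcal{H})\setminus V(\mathcal{C})$ and every set $U_u$ usable for $u$ with $|U_u|\ge d_{\mathcal{C}}(u)/6$: (a) $|U_u\cap S|\le 3$; (b) $|U_u\cap B|\ge |U_u|-3$; (c) $|R(v_i,v_j)|\ge d_{\mathcal{C}}(v_i)+d_{\mathcal{C}}(v_j)-|V(\mathcal{C})|-4$ for all distinct $v_i,v_j\in U_u$; (d) $u\in S'$; (e) $|U_u\cap B'|\le 3$.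
   Context: A $[3]$-graph is a hypergraph in which every edge has at most $3$ vertices. For vertices $x,y$, $E(x,y)$ is the set of edges containing both; $x,y$ are adjacent if $E(x,y)\neq\emptyset$; $N(x)$ is the set of vertices adjacent to $x$ and $d_{\partial\mathcal{H}}(x)=|N(x)|$. A Berge cycle $\mathcal{C}=v_1,e_1,\dots,v_\ell,e_\ell,v_1$ consists of distinct edges $e_1,\dots,e_\ell$ and distinct vertices $v_1,\dots,v_\ell$ with $\{v_i,v_{i+1}\}\subseteq e_i$ (indices modulo $\ell$); $V(\mathcal{C})=\{v_1,\dots,v_\ell\}$. It is maximal if there is no Berge cycle $\mathcal{C}'$ with $V(\mathcal{C})\subsetneq V(\mathcal{C}')$. $N_{\mathcal{C}}(x)=N(x)\cap V(\mathcal{C})$, $d_{\mathcal{C}}(x)=|N_{\mathcal{C}}(x)|$. A set $U_u\subseteq V(\mathcal{C})$ is usable for $u\notin V(\mathcal{C})$ if: (1) for every $v_i\in U_u$, $E(u,v_{i-1})\setminus\{e_{i-2}\}\neq\emptyset$; (2) for any distinct $v_i,v_j\in U_u$, $v_i$ and $v_j$ are not consecutive on $\mathcal{C}$; (3) for any distinct $v_i,v_j\in U_u$ there exist edges $e(u,v_{i-1})\in E(u,v_{i-1})\setminus\{e_{i-2}\}$ and $e(u,v_{j-1})\in E(u,v_{j-1})\setminus\{e_{j-2}\}$ with $e(u,v_{i-1})\neq e(u,v_{j-1})$. Vertex classes (all vertices of $\mathcal{H}$): $S'=\{v: d_{\mathcal{C}}(v)<n/4+\gamma_1\}$, $S=\{v: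 d_{\mathcal{C}}(v)<(n+d_0)/2-3\}$, $B=\{v: d_{\mathcal{C}}(v)\ge (n+d_0)/2-3\}$, $B'=\{v: d_{\mathcal{C}}(v)\ge 3n/4+\gamma_2\}$. For distinct vertices $v_i,v_j,v_k$ of $\mathcal{C}$, write $v_i\to v_k\to v_j$ if $v_k$ lies on the segment of $\mathcal{C}$ going from $v_i$ to $v_j$ in the direction of increasing indices. An edge $e$ is an $(i,j;k)$-bridge if either $v_i\to v_k\to v_j$ and ($e=e_{k+1}=\{v_i,v_{k+1},v_{k+2}\}$ or $e=e_{k-1}=\{v_j,v_k,v_{k-1}\}$), or $v_j\to v_k\to v_i$ and ($e=e_{k-1}=\{v_i,v_k,v_{k-1}\}$ or $e=e_{k+1}=\{v_j,v_{k+1},v_{k+2}\}$). $R(v_i,v_j)$ is the set of all edges that are $(i,j;k)$-bridges for some index $k\notin\{i,j\}$. *)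

theory Defs
  imports Complex_Main
begin

definition three_graph :: "'a set \<Rightarrow> 'a set set \<Rightarrow> bool" where
  "three_graph V E \<longleftrightarrow> finite V \<and> (\<forall>e\<in>E. e \<subseteq> V \<and> card e \<le> 3)"

definition edges_with :: "'a set set \<Rightarrow> 'a \<Rightarrow> 'a \<Rightarrow> 'a set set" where
  "edges_with E x y = {e \<in> E. x \<in> e \<and> y \<in> e}"

definition adjacent :: "'a set set \<Rightarrow> 'a \<Rightarrow> 'a \<Rightarrow> bool" where
  "adjacent E x y \<longleftrightarrow> edges_with E x y \<noteq> {}"

definition nbhd :: "'a set \<Rightarrow> 'a set set \<Rightarrow> 'a \<Rightarrow> 'a set" where
  "nbhd V E x = {y \<in> V. y \<noteq> x \<and> adjacent E x y}"

definition deg :: "'a set \<Rightarrow> 'a set set \<Rightarrow> 'a \<Rightarrow> nat" where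
  "deg V E x = card (nbhd V E x)"

text \<open>A Berge cycle v_0,e_0,...,v_(l-1),e_(l-1),v_0 given by a list of vertices and a list
  of edges (0-based indexing; the paper uses 1-based), with {v_i, v_(i+1)} \<subseteq> e_i mod l.\<close>
definition berge_cycle :: "'a set set \<Rightarrow> 'a list \<Rightarrow> 'a set list \<Rightarrow> bool" where
  "berge_cycle E vs es \<longleftrightarrow> length vs = length es \<and> length vs \<ge> 2 \<and>
     distinct vs \<and> distinct es \<and> set es \<subseteq> E \<and>
     (\<forall>i<length vs. {vs ! i, vs ! ((i + 1) mod length vs)} \<subseteq> es ! i)"

definition maximal_berge_cycle :: "'a set set \<Rightarrow> 'a list \<Rightarrow> 'a set list \<Rightarrow> bool" where
  "maximal_berge_cycle E vs es \<longleftrightarrow> berge_cycle E vs es \<and>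
     \<not> (\<exists>vs' es'. berge_cycle E vs' es' \<and> set vs \<subset> set vs')"

definition cv :: "'a list \<Rightarrow> int \<Rightarrow> 'a" where
  "cv vs i = vs ! nat (i mod int (length vs))"

definition ce :: "'a set list \<Rightarrow> int \<Rightarrow> 'a set" where
  "ce es i = es ! nat (i mod int (length es))"

definition degC :: "'a set \<Rightarrow> 'a set set \<Rightarrow> 'a list \<Rightarrow> 'a \<Rightarrow> nat" where
  "degC V E vs x = card (nbhd V E x \<inter> set vs)"

definition usable :: "'a set set \<Rightarrow> 'a list \<Rightarrow> 'a set list \<Rightarrow> 'a \<Rightarrow> 'a set \<Rightarrow> bool" where
  "usable E vs es u U \<longleftrightarrow> U \<subseteq> set vs \<and>
    (\<forall>i\<in>{0..<int (length vs)}. cv vs i \<in> U \<longrightarrow>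
        edges_with E u (cv vs (i - 1)) - {ce es (i - 2)} \<noteq> {}) \<and>
    (\<forall>i\<in>{0..<int (length vs)}. \<forall>j\<in>{0..<int (length vs)}.
        cv vs i \<in> U \<and> cv vs j \<in> U \<and> i \<noteq> j \<longrightarrow>
        j \<noteq> (i + 1) mod int (length vs) \<and> i \<noteq> (j + 1) mod int (length vs)) \<and>
    (\<forall>i\<in>{0..<int (length vs)}. \<forall>j\<in>{0..<int (length vs)}.
        cv vs i \<in> U \<and> cv vs j \<in> U \<and> i \<noteq> j \<longrightarrow>
        (\<exists>f g. f \<in> edges_with E u (cv vs (i - 1)) - {ce es (i - 2)} \<and>
               g \<in> edges_with E u (cv vs (j - 1)) - {ce es (j - 2)} \<and> f \<noteq> g))"

definition classS' :: "'a set \<Rightarrow> 'a set set \<Rightarrow> 'a list \<Rightarrow> nat \<Rightarrow> real \<Rightarrow> 'a set" where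
  "classS' V E vs n \<gamma>1 = {v \<in> V. real (degC V E vs v) < real n / 4 + \<gamma>1}"

definition classS :: "'a set \<Rightarrow> 'a set set \<Rightarrow> 'a list \<Rightarrow> nat \<Rightarrow> real \<Rightarrow> 'a set" where
  "classS V E vs n d0 = {v \<in> V. real (degC V E vs v) < (real n + d0) / 2 - 3}"

definition classB :: "'a set \<Rightarrow> 'a set set \<Rightarrow> 'a list \<Rightarrow> nat \<Rightarrow> real \<Rightarrow> 'a set" where
  "classB V E vs n d0 = {v \<in> V. real (degC V E vs v) \<ge> (real n + d0) / 2 - 3}"

definition classB' :: "'a set \<Rightarrow> 'a set set \<Rightarrow> 'a list \<Rightarrow> nat \<Rightarrow> real \<Rightarrow> 'a set" where
  "classB' V E vs n \<gamma>2 = {v \<in> V. real (degC V E vs v) \<ge> 3 * real n / 4 + \<gamma>2}"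

text \<open>v_i \<rightarrow> v_k \<rightarrow> v_j: distinct indices (mod l) with v_k on the segment from v_i to v_j
  in the direction of increasing indices.\<close>
definition on_seg :: "int \<Rightarrow> int \<Rightarrow> int \<Rightarrow> int \<Rightarrow> bool" where
  "on_seg l i k j \<longleftrightarrow> i mod l \<noteq> k mod l \<and> k mod l \<noteq> j mod l \<and> i mod l \<noteq> j mod l \<and>
     (k - i) mod l < (j - i) mod l"

definition bridge :: "'a list \<Rightarrow> 'a set list \<Rightarrow> int \<Rightarrow> int \<Rightarrow> int \<Rightarrow> 'a set \<Rightarrow> bool" where
  "bridge vs es i j k e \<longleftrightarrow>
    (on_seg (int (length vs)) i k j \<and>
      ((e = ce es (k + 1) \<and> ce es (k + 1) = {cv vs i, cv vs (k + 1), cv vs (k + 2)}) \<or>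
       (e = ce es (k - 1) \<and> ce es (k - 1) = {cv vs j, cv vs k, cv vs (k - 1)}))) \<or>
    (on_seg (int (length vs)) j k i \<and>
      ((e = ce es (k - 1) \<and> ce es (k - 1) = {cv vs i, cv vs k, cv vs (k - 1)}) \<or>
       (e = ce es (k + 1) \<and> ce es (k + 1) = {cv vs j, cv vs (k + 1), cv vs (k + 2)})))"

definition bridges :: "'a list \<Rightarrow> 'a set list \<Rightarrow> int \<Rightarrow> int \<Rightarrow> 'a set set" where
  "bridges vs es i j = {e. \<exists>k\<in>{0..<int (length vs)}. k \<noteq> i \<and> k \<noteq> j \<and> bridge vs es i j k e}"

end

theory Submission
  imports Defs
begin


lemma dvd_small0:
  fixes L z :: int
  assumes "L dvd z" "0 < L" "- L < z" "z < L"
  shows "z = 0"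
proof -
  obtain m where m: "z = L * m" using assms(1) by (auto elim: dvdE)
  have "m = 0"
  proof (rule ccontr)
    assume "m \<noteq> 0"
    then have "m \<ge> 1 \<or> m \<le> -1" by arith
    then show False
    proof
      assume "m \<ge> 1" then have "L * m \<ge> L * 1" using assms(2) by (intro mult_left_mono) auto
      then show False using m assms by linarith
    next
      assume "m \<le> -1" then have "L * m \<le> L * (-1)" using assms(2) by (intro mult_left_mono) auto
      then show False using m assms by linarith
    qed
  qed
  then show ?thesis using m by simp
qed

lemma dvd_small1:
  fixes L z :: int
  assumes "L dvd z" "0 < L" "- L < z" "z < 2 * L"
  shows "z = 0 \<or> z = L"
proof (cases "z < L")
  case True then show ?thesis using dvd_small0 assms by blast
next
  case False
  have "L dvd z - L" using assms(1) by simp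
  then have "z - L = 0" using dvd_small0[of L "z - L"] assms False by simp
  then show ?thesis by simp
qed

lemma dvd_small2:
  fixes L z :: int
  assumes "L dvd z" "0 < L" "- 2 * L < z" "z < L"
  shows "z = 0 \<or> z = - L"
proof (cases "z > - L")
  case True then show ?thesis using dvd_small0 assms by blast
next
  case False
  have "L dvd z + L" using assms(1) by simp
  then have "z + L = 0" using dvd_small0[of L "z + L"] assms False by simp
  then show ?thesis by simp
qed

lemma four_card:
  assumes "finite e" "card e \<le> 3" "a \<in> e" "b \<in> e" "c \<in> e" "d \<in> e"
    "a \<noteq> b" "a \<noteq> c" "a \<noteq> d" "b \<noteq> c" "b \<noteq> d" "c \<noteq> d"
  shows False
proof -
  have "{a,b,c,d} \<subseteq> e" using assms by auto
  then have "card {a,b,c,d} \<le> card e" using assms(1) card_mono by blast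
  moreover have "card {a,b,c,d} = 4" using assms by auto
  ultimately show False using assms(2) by simp
qed

lemma three_card_eq:
  assumes "finite e" "card e \<le> 3" "a \<in> e" "b \<in> e" "c \<in> e"
    "a \<noteq> b" "a \<noteq> c" "b \<noteq> c"
  shows "e = {a,b,c}"
proof -
  have s: "{a,b,c} \<subseteq> e" using assms by auto
  have "card {a,b,c} = 3" using assms by auto
  then show ?thesis using card_subset_eq[OF assms(1) s] assms(2) card_mono[OF assms(1) s] by simp
qed

lemma mk_cycle:
  fixes W :: "nat \<Rightarrow> 'a" and F :: "nat \<Rightarrow> 'a set" and N :: nat
  assumes "N \<ge> 2" "inj_on W {..<N}" "inj_on F {..<N}" "\<And>t. t < N \<Longrightarrow> F t \<in> E"
    "\<And>t. t < N \<Longrightarrow> W t \<in> F t" "\<And>t. t < N \<Longrightarrow> W ((t+1) mod N) \<in> F t"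
  shows "berge_cycle E (map W [0..<N]) (map F [0..<N])"
  unfolding berge_cycle_def
proof (intro conjI allI impI)
  show "distinct (map W [0..<N])" using assms(2) by (simp add: distinct_map lessThan_atLeast0)
  show "distinct (map F [0..<N])" using assms(3) by (simp add: distinct_map lessThan_atLeast0)
  show "set (map F [0..<N]) \<subseteq> E" using assms(4) by auto
  fix i assume i: "i < length (map W [0..<N])"
  have "(i+1) mod N < N" using assms(1) by simp
  then show "{map W [0..<N] ! i, map W [0..<N] ! ((i + 1) mod length (map W [0..<N]))} \<subseteq> map F [0..<N] ! i"
    using i assms(5,6) by simp
qed (use assms in auto)

locale cyc =
  fixes V :: "'a set" and E :: "'a set set" and vs :: "'a list" and es :: "'a set list"
  assumes H: "three_graph V E" and C: "maximal_berge_cycle E vs es"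
begin

abbreviation "L \<equiv> int (length vs)"

lemma BC: "berge_cycle E vs es" using C unfolding maximal_berge_cycle_def by blast

lemma len_es: "length es = length vs" using BC unfolding berge_cycle_def by simp
lemma len2: "length vs \<ge> 2" using BC unfolding berge_cycle_def by simp
lemma Lpos: "L > 0" using len2 by linarith
lemma dvs: "distinct vs" using BC unfolding berge_cycle_def by simp
lemma des: "distinct es" using BC unfolding berge_cycle_def by simp
lemma esE: "set es \<subseteq> E" using BC unfolding berge_cycle_def by simp

lemma edge_fin: "e \<in> E \<Longrightarrow> finite e \<and> card e \<le> 3 \<and> e \<subseteq> V"
  using H unfolding three_graph_def by (meson finite_subset)

lemma finV: "finite V" using H unfolding three_graph_def by simp

lemma nat_mod_lt: "nat (x mod L) < length vs"
  using Lpos by (simp add: nat_less_iff)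

lemma cv_in: "cv vs x \<in> set vs"
  unfolding cv_def using nat_mod_lt by simp

lemma ce_in: "ce es x \<in> E"
  unfolding ce_def using nat_mod_lt len_es esE by (metis nth_mem subsetD)

lemma ce_in_set: "ce es x \<in> set es"
  unfolding ce_def using nat_mod_lt len_es by (metis nth_mem)

lemma cv_eq: "cv vs x = cv vs y \<longleftrightarrow> L dvd (x - y)"
proof -
  have "cv vs x = cv vs y \<longleftrightarrow> nat (x mod L) = nat (y mod L)"
    unfolding cv_def using nat_mod_lt dvs by (simp add: nth_eq_iff_index_eq)
  also have "\<dots> \<longleftrightarrow> x mod L = y mod L" using Lpos by (simp add: eq_nat_nat_iff)
  also have "\<dots> \<longleftrightarrow> L dvd (x - y)" by (simp add: mod_eq_dvd_iff)
  finally show ?thesis .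
qed

lemma ce_eq: "ce es x = ce es y \<longleftrightarrow> L dvd (x - y)"
proof -
  have "ce es x = ce es y \<longleftrightarrow> nat (x mod L) = nat (y mod L)"
    unfolding ce_def using nat_mod_lt des len_es by (simp add: nth_eq_iff_index_eq)
  also have "\<dots> \<longleftrightarrow> x mod L = y mod L" using Lpos by (simp add: eq_nat_nat_iff)
  also have "\<dots> \<longleftrightarrow> L dvd (x - y)" by (simp add: mod_eq_dvd_iff)
  finally show ?thesis .
qed

lemma cyc1: "cv vs x \<in> ce es x"
proof -
  have "{vs ! nat (x mod L), vs ! ((nat (x mod L) + 1) mod length vs)} \<subseteq> es ! nat (x mod L)"
    using BC nat_mod_lt unfolding berge_cycle_def by blast
  then show ?thesis unfolding cv_def ce_def len_es by simp
qed

lemma cyc2: "cv vs (x + 1) \<in> ce es x"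
proof -
  have "{vs ! nat (x mod L), vs ! ((nat (x mod L) + 1) mod length vs)} \<subseteq> es ! nat (x mod L)"
    using BC nat_mod_lt unfolding berge_cycle_def by blast
  moreover have "(nat (x mod L) + 1) mod length vs = nat ((x + 1) mod L)"
  proof -
    have "int ((nat (x mod L) + 1) mod length vs) = (x mod L + 1) mod L"
      using Lpos by (simp add: zmod_int add.commute)
    also have "\<dots> = (x + 1) mod L" by (simp add: mod_add_left_eq)
    finally show ?thesis by simp
  qed
  ultimately show ?thesis unfolding cv_def ce_def len_es by simp
qed

lemma setvs_V: "set vs \<subseteq> V"
proof
  fix v assume "v \<in> set vs"
  then obtain i where i: "i < length vs" "vs ! i = v" by (auto simp: in_set_conv_nth)
  have "cv vs (int i) = v" unfolding cv_def using i by simp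
  then show "v \<in> V" using cyc1[of "int i"] ce_in[of "int i"] edge_fin by blast
qed

lemma card_vs: "card (set vs) = length vs" using dvs by (simp add: distinct_card)

lemma cv_surj: "v \<in> set vs \<Longrightarrow> \<exists>x\<in>{0..<L}. cv vs x = v"
proof -
  assume "v \<in> set vs"
  then obtain i where i: "i < length vs" "vs ! i = v" by (auto simp: in_set_conv_nth)
  then show ?thesis by (intro bexI[of _ "int i"]) (auto simp: cv_def)
qed

lemma cv_off_surj: "v \<in> set vs \<Longrightarrow> \<exists>c\<in>{0..<L}. cv vs (a + c) = v"
proof -
  assume "v \<in> set vs"
  then obtain x where x: "x \<in> {0..<L}" "cv vs x = v" using cv_surj by blast
  define c where "c = (x - a) mod L"
  have "c \<in> {0..<L}" using Lpos unfolding c_def by simp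
  moreover have "cv vs (a + c) = cv vs x" unfolding cv_eq c_def
    by (simp add: mod_eq_dvd_iff[symmetric] mod_add_right_eq)
  ultimately show ?thesis using x by blast
qed

lemma cv_off_inj: "c \<in> {0..<L} \<Longrightarrow> c' \<in> {0..<L} \<Longrightarrow> cv vs (a + c) = cv vs (a + c') \<Longrightarrow> c = c'"
  unfolding cv_eq using dvd_small0[of L "c - c'"] Lpos by auto

lemma bij_off: "bij_betw (\<lambda>c. cv vs (a + c)) {0..<L} (set vs)"
  unfolding bij_betw_def inj_on_def using cv_off_inj cv_off_surj cv_in by (auto simp: image_iff) (metis)

lemma four: "e \<in> E \<Longrightarrow> a \<in> e \<Longrightarrow> b \<in> e \<Longrightarrow> c \<in> e \<Longrightarrow> d \<in> e \<Longrightarrow>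
    a \<noteq> b \<Longrightarrow> a \<noteq> c \<Longrightarrow> a \<noteq> d \<Longrightarrow> b \<noteq> c \<Longrightarrow> b \<noteq> d \<Longrightarrow> c \<noteq> d \<Longrightarrow> False"
  using four_card edge_fin by metis

lemma three_eq: "e \<in> E \<Longrightarrow> a \<in> e \<Longrightarrow> b \<in> e \<Longrightarrow> c \<in> e \<Longrightarrow>
    a \<noteq> b \<Longrightarrow> a \<noteq> c \<Longrightarrow> b \<noteq> c \<Longrightarrow> e = {a,b,c}"
  using three_card_eq edge_fin by metis

lemma extend_False:
  assumes "berge_cycle E ws fs" "set vs \<subset> set ws" shows False
  using C assms unfolding maximal_berge_cycle_def by blast

end


context cyc begin

lemma cycI: "y = x \<or> y = x + 1 \<Longrightarrow> cv vs y \<in> ce es x"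
  using cyc1 cyc2 by blast

lemma extend_from:
  fixes W :: "nat \<Rightarrow> 'a" and F :: "nat \<Rightarrow> 'a set"
  assumes u: "u \<notin> set vs"
    and injW: "inj_on W {..<length vs + 1}" and injF: "inj_on F {..<length vs + 1}"
    and FE: "\<And>t. t < length vs + 1 \<Longrightarrow> F t \<in> E"
    and W1: "\<And>t. t < length vs + 1 \<Longrightarrow> W t \<in> F t"
    and W2: "\<And>t. t < length vs + 1 \<Longrightarrow> W ((t+1) mod (length vs + 1)) \<in> F t"
    and Wr: "\<And>t. t < length vs + 1 \<Longrightarrow> W t \<in> insert u (set vs)"
  shows False
proof -
  define N where "N = length vs + 1"
  have N2: "N \<ge> 2" using len2 unfolding N_def by simp
  have bc: "berge_cycle E (map W [0..<N]) (map F [0..<N])"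
    using mk_cycle[OF N2, of W F E] injW injF FE W1 W2 unfolding N_def by blast
  have sub: "set (map W [0..<N]) \<subseteq> insert u (set vs)"
  proof
    fix x assume "x \<in> set (map W [0..<N])"
    then obtain t where "t < N" "x = W t" by auto
    then show "x \<in> insert u (set vs)" using Wr unfolding N_def by blast
  qed
  have "card (set (map W [0..<N])) = N"
  proof -
    have "distinct (map W [0..<N])" using injW unfolding N_def distinct_map
      by (simp add: lessThan_atLeast0 del: upt_Suc)
    then show ?thesis using distinct_card by fastforce
  qed
  moreover have "card (insert u (set vs)) = N" using u card_vs unfolding N_def by simp
  ultimately have "set (map W [0..<N]) = insert u (set vs)"
    using card_subset_eq[OF _ sub] by simp
  then have "set vs \<subset> set (map W [0..<N])" using u by auto
  then show False using extend_False bc by blast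
qed

lemma GEN:
  fixes a d c :: int
  assumes u: "u \<notin> set vs"
    and dc: "2 \<le> d" "d \<le> c" "c \<le> L - 2"
    and E: "f \<in> E" "g \<in> E" "h1 \<in> E" "h2 \<in> E"
    and m: "u \<in> f" "cv vs (a + L - 1) \<in> f" "u \<in> g" "cv vs (a + d - 1) \<in> g"
      "cv vs a \<in> h1" "cv vs (a + c) \<in> h1" "cv vs (a + d) \<in> h2" "cv vs (a + c + 1) \<in> h2"
    and dist: "f \<noteq> g" "f \<noteq> h1" "f \<noteq> h2" "g \<noteq> h1" "g \<noteq> h2" "h1 \<noteq> h2"
    and nu: "\<And>p. (c + 1 \<le> p \<and> p \<le> L - 2) \<or> (d \<le> p \<and> p \<le> c - 1) \<or> (0 \<le> p \<and> p \<le> d - 2) \<Longrightarrow>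
        f \<noteq> ce es (a + p) \<and> g \<noteq> ce es (a + p) \<and> h1 \<noteq> ce es (a + p) \<and> h2 \<noteq> ce es (a + p)"
  shows False
proof -
  define off :: "int \<Rightarrow> int" where "off T = (if T \<le> L - 1 - c then L - T else if T \<le> L - d then d + T - L + c else T - (L - d + 1))" for T
  define q :: "int \<Rightarrow> int" where "q T = (if T \<le> L - 2 - c then L - T - 1 else if T \<le> L - d - 1 then d + T - L + c else T - (L - d + 1))" for T
  define W where "W t = (if t = 0 then u else cv vs (a + off (int t)))" for t :: nat
  define F where "F t = (if t = 0 then f else if int t = L - 1 - c then h2 else if int t = L - d then h1
      else if int t = L then g else ce es (a + q (int t)))" for t :: nat
  have vsne: "vs \<noteq> []" using len2 by auto
  define cyc where "cyc T \<longleftrightarrow> (1 \<le> T \<and> T \<le> L - 2 - c) \<or> (L - c \<le> T \<and> T \<le> L - d - 1) \<or> (L - d + 1 \<le> T \<and> T \<le> L - 1)" for T :: int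
  have orange: "0 \<le> off T \<and> off T < L" if "1 \<le> T" "T \<le> L" for T
    using that dc unfolding off_def by auto
  have oinj: "T = T'" if "1 \<le> T" "T \<le> L" "1 \<le> T'" "T' \<le> L" "off T = off T'" for T T'
    using that dc unfolding off_def by (auto split: if_splits)
  have qrange: "(c + 1 \<le> q T \<and> q T \<le> L - 2) \<or> (d \<le> q T \<and> q T \<le> c - 1) \<or> (0 \<le> q T \<and> q T \<le> d - 2)" if "cyc T" for T
    using that dc unfolding q_def cyc_def by auto
  have qinj: "T = T'" if "cyc T" "cyc T'" "q T = q T'" for T T'
    using that dc unfolding q_def cyc_def by (auto split: if_splits)
  have qinj2: "T = T'" if "cyc T" "cyc T'" "ce es (a + q T) = ce es (a + q T')" for T T'
  proof -
    have "L dvd (q T - q T')" using that(3) unfolding ce_eq by simp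
    moreover have "0 \<le> q T \<and> q T < L" using qrange[OF that(1)] dc by linarith
    moreover have "0 \<le> q T' \<and> q T' < L" using qrange[OF that(2)] dc by linarith
    ultimately have "q T = q T'" using dvd_small0[of L "q T - q T'"] Lpos by simp
    then show ?thesis using qinj that by blast
  qed
  have Fcyc: "F t = ce es (a + q (int t))" if "cyc (int t)" for t
    using that dc unfolding F_def cyc_def by auto
  have notcyc: "\<not> cyc (int t) \<Longrightarrow> t < length vs + 1 \<Longrightarrow> t = 0 \<or> int t = L - 1 - c \<or> int t = L - d \<or> int t = L" for t
    unfolding cyc_def using dc by auto
  have spec_ne: "F t \<noteq> ce es (a + q T)" if "\<not> cyc (int t)" "t < length vs + 1" "cyc T" for t T
  proof -
    have "f \<noteq> ce es (a + q T) \<and> g \<noteq> ce es (a + q T) \<and> h1 \<noteq> ce es (a + q T) \<and> h2 \<noteq> ce es (a + q T)"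
      using nu qrange[OF that(3)] by blast
    then show ?thesis using notcyc[OF that(1,2)] dc unfolding F_def by auto
  qed
  have memb: "W t \<in> F t \<and> W ((t+1) mod (length vs + 1)) \<in> F t" if tl: "t < length vs + 1" for t
  proof -
    consider "t = 0" | "1 \<le> int t \<and> int t \<le> L - 2 - c" | "int t = L - 1 - c"
      | "L - c \<le> int t \<and> int t \<le> L - d - 1" | "int t = L - d" | "L - d + 1 \<le> int t \<and> int t \<le> L - 1"
      | "int t = L" using tl dc by linarith
    then show ?thesis
    proof cases
      case 1
      have "W 1 = cv vs (a + L - 1)" unfolding W_def off_def using dc by (simp add: algebra_simps)
      then show ?thesis using 1 m len2 unfolding W_def F_def by simp
    next
      case 2
      have tt: "(t + 1) mod (length vs + 1) = t + 1" using tl 2 dc by simp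
      have "W t = cv vs (a + (L - int t))" "W (t+1) = cv vs (a + (L - int t - 1))"
        using 2 dc unfolding W_def off_def by (auto simp: algebra_simps)
      moreover have "F t = ce es (a + (L - int t - 1))" using 2 dc unfolding F_def q_def by auto
      ultimately show ?thesis using tt by (auto intro!: cycI)
    next
      case 3
      have tt: "(t + 1) mod (length vs + 1) = t + 1" using tl 3 dc by simp
      have o1: "off (int t) = c + 1" "off (int (t+1)) = d" using 3 dc unfolding off_def by auto
      have "t \<noteq> 0" using 3 dc by auto
      then have "W t = cv vs (a + (c + 1))" "W (t+1) = cv vs (a + d)"
        using o1 unfolding W_def by auto
      moreover have "a + (c + 1) = a + c + 1" by simp
      moreover have "F t = h2" using 3 dc unfolding F_def by auto
      ultimately show ?thesis using tt m by metis
    next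
      case 4
      have tt: "(t + 1) mod (length vs + 1) = t + 1" using tl 4 dc by simp
      have "W t = cv vs (a + (d + int t - L + c))" "W (t+1) = cv vs (a + (d + int t - L + c) + 1)"
        using 4 dc unfolding W_def off_def by (auto simp: algebra_simps)
      moreover have "F t = ce es (a + (d + int t - L + c))" using 4 dc unfolding F_def q_def by auto
      ultimately show ?thesis using tt by (auto intro!: cycI)
    next
      case 5
      have tt: "(t + 1) mod (length vs + 1) = t + 1" using tl 5 dc by simp
      have o1: "off (int t) = c" "off (int (t+1)) = 0" using 5 dc unfolding off_def by auto
      have "t \<noteq> 0" using 5 dc by auto
      then have "W t = cv vs (a + c)" "W (t+1) = cv vs a"
        using o1 unfolding W_def by auto
      moreover have "F t = h1" using 5 dc unfolding F_def by auto
      ultimately show ?thesis using tt m by metis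
    next
      case 6
      have tt: "(t + 1) mod (length vs + 1) = t + 1" using tl 6 dc by simp
      have "W t = cv vs (a + (int t - (L - d + 1)))" "W (t+1) = cv vs (a + (int t - (L - d + 1)) + 1)"
        using 6 dc unfolding W_def off_def by (auto simp: algebra_simps)
      moreover have "F t = ce es (a + (int t - (L - d + 1)))" using 6 dc unfolding F_def q_def by auto
      ultimately show ?thesis using tt by (auto intro!: cycI)
    next
      case 7
      have tt: "(t + 1) mod (length vs + 1) = 0" using 7 by simp
      have o1: "off (int t) = d - 1" using 7 dc unfolding off_def by auto
      have "t \<noteq> 0" using 7 dc by auto
      then have "W t = cv vs (a + (d - 1))" "W 0 = u"
        using o1 unfolding W_def by auto
      moreover have "a + (d - 1) = a + d - 1" by simp
      moreover have "F t = g" using 7 dc unfolding F_def by auto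
      ultimately show ?thesis using tt m by metis
    qed
  qed
  show False
  proof (rule extend_from[OF u, of W F])
    show "inj_on W {..<length vs + 1}"
    proof (rule inj_onI)
      fix t t' assume t: "t \<in> {..<length vs + 1}" "t' \<in> {..<length vs + 1}" "W t = W t'"
      show "t = t'"
      proof (cases "t = 0 \<or> t' = 0")
        case True then show ?thesis using t u cv_in unfolding W_def by (auto split: if_splits)
      next
        case False
        then have "cv vs (a + off (int t)) = cv vs (a + off (int t'))" using t unfolding W_def by simp
        then have "off (int t) = off (int t')" using cv_off_inj orange t False by simp
        moreover have "1 \<le> int t" "int t \<le> L" "1 \<le> int t'" "int t' \<le> L" using t False by auto
        ultimately have "int t = int t'" using oinj by blast
        then show ?thesis by simp
      qed
    qed
    show "inj_on F {..<length vs + 1}"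
    proof (rule inj_onI)
      fix t t' assume t: "t \<in> {..<length vs + 1}" "t' \<in> {..<length vs + 1}" "F t = F t'"
      show "t = t'"
      proof (cases "cyc (int t)")
        case True note tc = True
        show ?thesis
        proof (cases "cyc (int t')")
          case True
          have "ce es (a + q (int t)) = ce es (a + q (int t'))" using Fcyc[OF tc] Fcyc[OF True] t by simp
          then have "int t = int t'" using qinj2[OF tc True] by blast
          then show ?thesis by simp
        next
          case False then show ?thesis using spec_ne[OF False _ tc] t Fcyc[OF tc] by simp
        qed
      next
        case False note tc = False
        show ?thesis
        proof (cases "cyc (int t')")
          case True then show ?thesis using spec_ne[OF tc _ True] t Fcyc[OF True] by simp
        next
          case False
          have "t = 0 \<or> int t = L - 1 - c \<or> int t = L - d \<or> int t = L" using notcyc tc t by simp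
          moreover have "t' = 0 \<or> int t' = L - 1 - c \<or> int t' = L - d \<or> int t' = L" using notcyc False t by simp
          ultimately show ?thesis
          proof (elim disjE)
          qed (use t(3) dist dc vsne in \<open>simp_all add: F_def\<close>)
        qed
      qed
    qed
    show "F t \<in> E" if "t < length vs + 1" for t
      using E ce_in unfolding F_def by auto
    show "W t \<in> insert u (set vs)" if "t < length vs + 1" for t
      using cv_in unfolding W_def by auto
    show "W t \<in> F t" if "t < length vs + 1" for t using memb that by blast
    show "W ((t+1) mod (length vs + 1)) \<in> F t" if "t < length vs + 1" for t using memb that by blast
  qed
qed

end


context cyc begin

lemma cv_offL: "cv vs (a + L) = cv vs a" unfolding cv_eq by simp

lemma cv_ne_off: "0 \<le> x \<Longrightarrow> x < L \<Longrightarrow> 0 \<le> y \<Longrightarrow> y < L \<Longrightarrow> x \<noteq> y \<Longrightarrow> cv vs (a + x) \<noteq> cv vs (a + y)"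
  using cv_off_inj by auto

lemma ce_ne_off: "0 \<le> x \<Longrightarrow> x < L \<Longrightarrow> 0 \<le> y \<Longrightarrow> y < L \<Longrightarrow> x \<noteq> y \<Longrightarrow> ce es (a + x) \<noteq> ce es (a + y)"
  unfolding ce_eq using dvd_small0[of L "x - y"] Lpos by auto

lemma four_u:
  assumes "e \<in> E" "u \<notin> set vs" "u \<in> e" "cv vs (a + x) \<in> e" "cv vs (a + y) \<in> e" "cv vs (a + z) \<in> e"
    "0 \<le> x" "x < L" "0 \<le> y" "y < L" "0 \<le> z" "z < L" "x \<noteq> y" "x \<noteq> z" "y \<noteq> z"
  shows False
proof -
  have "u \<noteq> cv vs (a + x)" "u \<noteq> cv vs (a + y)" "u \<noteq> cv vs (a + z)" using assms(2) cv_in by metis+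
  moreover have "cv vs (a + x) \<noteq> cv vs (a + y)" "cv vs (a + x) \<noteq> cv vs (a + z)" "cv vs (a + y) \<noteq> cv vs (a + z)"
    using cv_ne_off assms by auto
  ultimately show False using four[OF assms(1,3-6)] by blast
qed

lemma four_v:
  assumes "e \<in> E" "cv vs (a + w) \<in> e" "cv vs (a + x) \<in> e" "cv vs (a + y) \<in> e" "cv vs (a + z) \<in> e"
    "0 \<le> w" "w < L" "0 \<le> x" "x < L" "0 \<le> y" "y < L" "0 \<le> z" "z < L"
    "w \<noteq> x" "w \<noteq> y" "w \<noteq> z" "x \<noteq> y" "x \<noteq> z" "y \<noteq> z"
  shows False
proof -
  have "cv vs (a + w) \<noteq> cv vs (a + x)" "cv vs (a + w) \<noteq> cv vs (a + y)" "cv vs (a + w) \<noteq> cv vs (a + z)"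
    "cv vs (a + x) \<noteq> cv vs (a + y)" "cv vs (a + x) \<noteq> cv vs (a + z)" "cv vs (a + y) \<noteq> cv vs (a + z)"
    using cv_ne_off assms by auto
  then show False using four[OF assms(1-5)] by blast
qed

lemma three_v:
  assumes "e \<in> E" "cv vs (a + x) \<in> e" "cv vs (a + y) \<in> e" "cv vs (a + z) \<in> e"
    "0 \<le> x" "x < L" "0 \<le> y" "y < L" "0 \<le> z" "z < L" "x \<noteq> y" "x \<noteq> z" "y \<noteq> z"
  shows "e = {cv vs (a + x), cv vs (a + y), cv vs (a + z)}"
proof -
  have "cv vs (a + x) \<noteq> cv vs (a + y)" "cv vs (a + x) \<noteq> cv vs (a + z)" "cv vs (a + y) \<noteq> cv vs (a + z)"
    using cv_ne_off assms by auto
  then show ?thesis using three_eq[OF assms(1-4)] by blast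
qed

lemma ce_off_mem: "0 \<le> p \<Longrightarrow> p \<le> L - 2 \<Longrightarrow> cv vs (a + p) \<in> ce es (a + p) \<and> cv vs (a + (p + 1)) \<in> ce es (a + p)"
  using cyc1 cyc2[of "a + p"] by (simp add: add.assoc)

lemma INS:
  fixes p :: int
  assumes u: "u \<notin> set vs" and E: "a' \<in> E" "b' \<in> E"
    and m: "cv vs p \<in> a'" "u \<in> a'" "u \<in> b'" "cv vs (p + 1) \<in> b'" and ab: "a' \<noteq> b'"
    and nu: "\<And>r. 0 \<le> r \<Longrightarrow> r \<le> L - 2 \<Longrightarrow> a' \<noteq> ce es (p + 1 + r) \<and> b' \<noteq> ce es (p + 1 + r)"
  shows False
proof -
  define W where "W t = (if t < length vs then cv vs (p + 1 + int t) else u)" for t :: nat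
  define F where "F t = (if t + 1 < length vs then ce es (p + 1 + int t) else if t + 1 = length vs then a' else b')" for t :: nat
  have vsne: "length vs \<ge> 2" using len2 .
  show False
  proof (rule extend_from[OF u, of W F])
    show "inj_on W {..<length vs + 1}"
    proof (rule inj_onI)
      fix t t' assume t: "t \<in> {..<length vs + 1}" "t' \<in> {..<length vs + 1}" "W t = W t'"
      show "t = t'"
      proof (cases "t < length vs \<and> t' < length vs")
        case True
        then have "cv vs ((p + 1) + int t) = cv vs ((p + 1) + int t')" using t unfolding W_def by simp
        then have "int t = int t'" using cv_off_inj[of "int t" "int t'" "p + 1"] True by simp
        then show ?thesis by simp
      next
        case False then show ?thesis using t u cv_in unfolding W_def by (auto split: if_splits)
      qed
    qed
    show "inj_on F {..<length vs + 1}"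
    proof (rule inj_onI)
      fix t t' assume t: "t \<in> {..<length vs + 1}" "t' \<in> {..<length vs + 1}" "F t = F t'"
      show "t = t'"
      proof (cases "t + 1 < length vs \<and> t' + 1 < length vs")
        case True
        then have "ce es ((p + 1) + int t) = ce es ((p + 1) + int t')" using t unfolding F_def by simp
        then have "int t = int t'" using ce_ne_off[of "int t" "int t'" "p + 1"] True by fastforce
        then show ?thesis by simp
      next
        case False
        have x1: "a' \<noteq> ce es (p + 1 + int s)" "b' \<noteq> ce es (p + 1 + int s)" if "s + 1 < length vs" for s
          using nu[of "int s"] that by auto
        show ?thesis using False t ab x1 unfolding F_def by (auto split: if_splits)
      qed
    qed
    show "F t \<in> E" if "t < length vs + 1" for t using E ce_in unfolding F_def by auto
    show "W t \<in> insert u (set vs)" if "t < length vs + 1" for t using cv_in unfolding W_def by auto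
    show "W t \<in> F t" if "t < length vs + 1" for t
    proof -
      have "t + 1 < length vs \<or> t + 1 = length vs \<or> t = length vs" using that by arith
      then consider "t + 1 < length vs" | "t + 1 = length vs" | "t = length vs" by blast
      then show ?thesis
      proof cases
        case 1 then show ?thesis unfolding W_def F_def using cyc1 by simp
      next
        case 2
        have "1 + int t = L" using 2 by simp
        then have "cv vs (p + 1 + int t) = cv vs p" unfolding cv_eq by (simp add: algebra_simps)
        then show ?thesis unfolding W_def F_def using 2 m by auto
      next
        case 3 then show ?thesis unfolding W_def F_def using m by auto
      qed
    qed
    show "W ((t+1) mod (length vs + 1)) \<in> F t" if "t < length vs + 1" for t
    proof -
      have "t + 1 < length vs \<or> t + 1 = length vs \<or> t = length vs" using that by arith
      then consider "t + 1 < length vs" | "t + 1 = length vs" | "t = length vs" by blast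
      then show ?thesis
      proof cases
        case 1 then show ?thesis unfolding W_def F_def using cyc2[of "p + 1 + int t"] by (simp add: algebra_simps)
      next
        case 2 then show ?thesis unfolding W_def F_def using m by auto
      next
        case 3 then show ?thesis unfolding W_def F_def using m vsne by auto
      qed
    qed
  qed
qed

end


context cyc begin

lemma vs_ne[simp]: "vs \<noteq> []" using len2 by auto

definition nx :: "int \<Rightarrow> int" where "nx p = (if p = L - 1 then 0 else p + 1)"

lemma nx_range: "0 \<le> p \<Longrightarrow> p < L \<Longrightarrow> 0 \<le> nx p \<and> nx p < L \<and> nx p \<noteq> p"
  unfolding nx_def using len2 by auto

lemma ce_mem_nx: "0 \<le> p \<Longrightarrow> p < L \<Longrightarrow> cv vs (a + p) \<in> ce es (a + p) \<and> cv vs (a + nx p) \<in> ce es (a + p)"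
proof -
  assume p: "0 \<le> p" "p < L"
  have "cv vs (a + p + 1) = cv vs (a + nx p)"
    unfolding cv_eq nx_def by auto
  then show ?thesis using cyc1 cyc2[of "a + p"] by simp
qed

lemma pos_u:
  assumes "e = ce es (a + p)" "u \<notin> set vs" "u \<in> e" "cv vs (a + x) \<in> e"
    "0 \<le> x" "x < L" "0 \<le> p" "p < L"
  shows "x = p \<or> x = nx p"
proof (rule ccontr)
  assume "\<not> ?thesis"
  moreover have "cv vs (a + p) \<in> e" "cv vs (a + nx p) \<in> e" using ce_mem_nx assms by auto
  moreover have "0 \<le> nx p \<and> nx p < L \<and> nx p \<noteq> p" using nx_range assms by auto
  ultimately show False using four_u[of e u a x p "nx p"] assms ce_in by auto
qed

lemma pos_2:
  assumes "e = ce es (a + p)" "cv vs (a + x) \<in> e" "cv vs (a + y) \<in> e"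
    "0 \<le> x" "x < L" "0 \<le> y" "y < L" "0 \<le> p" "p < L" "x \<noteq> y"
  shows "x = p \<or> x = nx p \<or> y = p \<or> y = nx p"
proof (rule ccontr)
  assume "\<not> ?thesis"
  moreover have "cv vs (a + p) \<in> e" "cv vs (a + nx p) \<in> e" using ce_mem_nx assms by auto
  moreover have "0 \<le> nx p \<and> nx p < L \<and> nx p \<noteq> p" using nx_range assms by auto
  ultimately show False using four_v[of e a x y p "nx p"] assms ce_in by auto
qed

lemma ce_norm: "0 \<le> P \<Longrightarrow> P < 2 * L \<Longrightarrow> ce es (a + P) = ce es (a + (if P < L then P else P - L))"
  unfolding ce_eq by auto

lemma cv_norm: "0 \<le> P \<Longrightarrow> P < 2 * L \<Longrightarrow> cv vs (a + P) = cv vs (a + (if P < L then P else P - L))"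
  unfolding cv_eq by auto

lemma Qlemma:
  fixes a d c :: int
  assumes u: "u \<notin> set vs"
    and dc: "2 \<le> d" "d + 1 \<le> c" "c \<le> L - 2"
    and E: "f \<in> E" "g \<in> E" "h1 \<in> E" "h2 \<in> E"
    and m: "u \<in> f" "cv vs (a + (L - 1)) \<in> f" "u \<in> g" "cv vs (a + (d - 1)) \<in> g"
      "cv vs a \<in> h1" "cv vs (a + c) \<in> h1" "cv vs (a + d) \<in> h2" "cv vs (a + (c + 1)) \<in> h2"
    and fg: "f \<noteq> g" "f \<noteq> ce es (a + (L - 2))" "g \<noteq> ce es (a + (d - 2))"
    and ex: "cv vs (a + c) \<notin> ce es a" "cv vs (a + (c + 1)) \<notin> ce es (a + d)"
  shows "ce es (a + (c - 1)) = {cv vs a, cv vs (a + c), cv vs (a + (c - 1))} \<or>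
         ce es (a + (c + 1)) = {cv vs (a + d), cv vs (a + (c + 1)), cv vs (a + (c + 2))}"
proof (rule ccontr)
  assume nb: "\<not> ?thesis"
  have a0: "cv vs (a + 0) = cv vs a" "ce es (a + 0) = ce es a" by simp_all
  show False
  proof (cases "c = L - 2 \<and> f = h2")
    case True
    show False
    proof (rule INS[OF u E(2) E(1), of "a + (d - 1)"])
      show "cv vs (a + (d - 1)) \<in> g" "u \<in> g" "u \<in> f" "g \<noteq> f" using m fg by auto
      show "cv vs (a + (d - 1) + 1) \<in> f" using m True by (simp add: algebra_simps)
      fix r :: int assume r: "0 \<le> r" "r \<le> L - 2"
      define p where "p = (if d + r < L then d + r else d + r - L)"
      have p: "0 \<le> p" "p < L" using r dc unfolding p_def by auto
      have ee: "ce es (a + (d - 1) + 1 + r) = ce es (a + p)"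
        using ce_norm[of "d + r" a] r dc unfolding p_def by (simp add: algebra_simps)
      have "g \<noteq> ce es (a + p)"
      proof
        assume gp: "g = ce es (a + p)"
        have "d - 1 = p \<or> d - 1 = nx p" using pos_u[OF gp u m(3) m(4)] p dc by auto
        then have "p = d - 2" using p r dc unfolding p_def nx_def by (auto split: if_splits)
        then show False using gp fg by simp
      qed
      moreover have "f \<noteq> ce es (a + p)"
      proof
        assume fp: "f = ce es (a + p)"
        have "L - 1 = p \<or> L - 1 = nx p" using pos_u[OF fp u m(1) m(2)] p dc by auto
        moreover have "d = p \<or> d = nx p" using pos_u[OF fp u m(1)] m(7) True p dc by auto
        ultimately show False using p dc unfolding nx_def by (auto split: if_splits)
      qed
      ultimately show "g \<noteq> ce es (a + (d - 1) + 1 + r) \<and> f \<noteq> ce es (a + (d - 1) + 1 + r)" using ee by simp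
    qed
  next
    case False
    show False
    proof (rule GEN[OF u, of d c f g h1 h2 a])
      show "2 \<le> d" "d \<le> c" "c \<le> L - 2" using dc by auto
      show "f \<in> E" "g \<in> E" "h1 \<in> E" "h2 \<in> E" using E by auto
      show "u \<in> f" "u \<in> g" "cv vs a \<in> h1" "cv vs (a + c) \<in> h1" "cv vs (a + d) \<in> h2" using m by auto
      show "cv vs (a + L - 1) \<in> f" using m by (simp add: algebra_simps)
      show "cv vs (a + d - 1) \<in> g" using m by (simp add: algebra_simps)
      show "cv vs (a + c + 1) \<in> h2" using m by (simp add: algebra_simps)
      show "f \<noteq> g" using fg by simp
      show "f \<noteq> h1"
      proof
        assume "f = h1"
        then show False using four_u[of f u a "L - 1" 0 c] E m u dc a0 by auto
      qed
      show "f \<noteq> h2"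
      proof
        assume fh: "f = h2"
        then have "c \<noteq> L - 2" using False by simp
        then show False using four_u[of f u a "L - 1" d "c + 1"] E m u dc fh by auto
      qed
      show "g \<noteq> h1"
      proof
        assume "g = h1"
        then show False using four_u[of g u a "d - 1" 0 c] E m u dc a0 by auto
      qed
      show "g \<noteq> h2"
      proof
        assume "g = h2"
        then show False using four_u[of g u a "d - 1" d "c + 1"] E m u dc by auto
      qed
      show "h1 \<noteq> h2"
      proof
        assume "h1 = h2"
        then show False using four_v[of h1 a 0 c d "c + 1"] E m dc a0 by auto
      qed
      fix p assume pU: "(c + 1 \<le> p \<and> p \<le> L - 2) \<or> (d \<le> p \<and> p \<le> c - 1) \<or> (0 \<le> p \<and> p \<le> d - 2)"
      have p: "0 \<le> p" "p < L" "p \<le> L - 2" using pU dc by auto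
      have nxp: "nx p = p + 1" using p unfolding nx_def by auto
      have "f \<noteq> ce es (a + p)"
      proof
        assume fp: "f = ce es (a + p)"
        have "L - 1 = p \<or> L - 1 = nx p" using pos_u[OF fp u m(1) m(2)] p dc by auto
        then have "p = L - 2" using p nxp by auto
        then show False using fp fg by simp
      qed
      moreover have "g \<noteq> ce es (a + p)"
      proof
        assume gp: "g = ce es (a + p)"
        have "d - 1 = p \<or> d - 1 = nx p" using pos_u[OF gp u m(3) m(4)] p dc by auto
        then have "p = d - 2" using p nxp pU dc by auto
        then show False using gp fg by simp
      qed
      moreover have "h1 \<noteq> ce es (a + p)"
      proof
        assume hp: "h1 = ce es (a + p)"
        have "0 = p \<or> 0 = nx p \<or> c = p \<or> c = nx p"
          using pos_2[OF hp, of 0 c] m(5,6) a0 p dc by auto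
        then have "p = 0 \<or> p = c - 1" using p nxp pU dc by auto
        then show False
        proof
          assume "p = 0" then show False using hp m(6) ex(1) by simp
        next
          assume p1: "p = c - 1"
          have "cv vs (a + (c - 1)) \<in> h1" using hp p1 ce_mem_nx[of p a] p by simp
          then have "h1 = {cv vs (a + 0), cv vs (a + c), cv vs (a + (c - 1))}"
            using three_v[of h1 a 0 c "c - 1"] E m a0 dc by auto
          then show False using nb hp p1 a0 by simp
        qed
      qed
      moreover have "h2 \<noteq> ce es (a + p)"
      proof
        assume hp: "h2 = ce es (a + p)"
        have "d = p \<or> d = nx p \<or> c + 1 = p \<or> c + 1 = nx p"
          using pos_2[OF hp, of d "c + 1"] m(7,8) p dc by auto
        then have "p = d \<or> p = c + 1" using p nxp pU dc by auto
        then show False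
        proof
          assume "p = d" then show False using hp m(8) ex(2) by simp
        next
          assume p1: "p = c + 1"
          have "cv vs (a + (c + 2)) \<in> h2" using hp p1 ce_mem_nx[of p a] p nxp by (simp add: add.assoc)
          then have "h2 = {cv vs (a + d), cv vs (a + (c + 1)), cv vs (a + (c + 2))}"
            using three_v[of h2 a d "c + 1" "c + 2"] E m dc p p1 by auto
          then show False using nb hp p1 by simp
        qed
      qed
      ultimately show "f \<noteq> ce es (a + p) \<and> g \<noteq> ce es (a + p) \<and> h1 \<noteq> ce es (a + p) \<and> h2 \<noteq> ce es (a + p)" by blast
    qed
  qed
qed

lemma ClaimA:
  fixes a d :: int
  assumes u: "u \<notin> set vs"
    and dc: "2 \<le> d" "d \<le> L - 2"
    and E: "f \<in> E" "g \<in> E" "h \<in> E"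
    and m: "u \<in> f" "cv vs (a + (L - 1)) \<in> f" "u \<in> g" "cv vs (a + (d - 1)) \<in> g"
      "cv vs a \<in> h" "cv vs (a + d) \<in> h"
    and fg: "f \<noteq> g" "f \<noteq> ce es (a + (L - 2))" "g \<noteq> ce es (a + (d - 2))"
  shows "cv vs (a + d) \<in> ce es a \<or> cv vs a \<in> ce es (a + d)"
proof (rule ccontr)
  assume nb: "\<not> ?thesis"
  have a0: "cv vs (a + 0) = cv vs a" "ce es (a + 0) = ce es a" by simp_all
  define h2 where "h2 = ce es (a + d)"
  have h2m: "cv vs (a + d) \<in> h2" "cv vs (a + (d + 1)) \<in> h2"
    using ce_mem_nx[of d a] dc unfolding h2_def nx_def by auto
  show False
  proof (rule GEN[OF u, of d d f g h h2 a])
    show "2 \<le> d" "d \<le> d" "d \<le> L - 2" using dc by auto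
    show "f \<in> E" "g \<in> E" "h \<in> E" "h2 \<in> E" using E ce_in unfolding h2_def by auto
    show "u \<in> f" "u \<in> g" "cv vs a \<in> h" "cv vs (a + d) \<in> h" "cv vs (a + d) \<in> h2" using m h2m by auto
    show "cv vs (a + L - 1) \<in> f" using m by (simp add: algebra_simps)
    show "cv vs (a + d - 1) \<in> g" using m by (simp add: algebra_simps)
    show "cv vs (a + d + 1) \<in> h2" using h2m by (simp add: algebra_simps)
    show "f \<noteq> g" using fg by simp
    show "f \<noteq> h"
    proof
      assume "f = h"
      then show False using four_u[of f u a "L - 1" 0 d] E m u dc a0 Lpos by auto
    qed
    show "f \<noteq> h2"
    proof
      assume fh: "f = h2"
      have "L - 1 = d \<or> L - 1 = nx d" using pos_u[OF fh[unfolded h2_def] u m(1) m(2)] dc by auto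
      then have "d = L - 2" using dc unfolding nx_def by (auto split: if_splits)
      then show False using fh fg unfolding h2_def by simp
    qed
    show "g \<noteq> h"
    proof
      assume "g = h"
      then show False using four_u[of g u a "d - 1" 0 d] E m u dc a0 by auto
    qed
    show "g \<noteq> h2"
    proof
      assume "g = h2"
      then show False using four_u[of g u a "d - 1" d "d + 1"] E m u dc h2m by auto
    qed
    show "h \<noteq> h2"
    proof
      assume "h = h2"
      then show False using nb m(5) unfolding h2_def by simp
    qed
    fix p assume pU: "(d + 1 \<le> p \<and> p \<le> L - 2) \<or> (d \<le> p \<and> p \<le> d - 1) \<or> (0 \<le> p \<and> p \<le> d - 2)"
    have p: "0 \<le> p" "p < L" "p \<le> L - 2" using pU dc by auto
    have nxp: "nx p = p + 1" using p unfolding nx_def by auto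
    have "f \<noteq> ce es (a + p)"
    proof
      assume fp: "f = ce es (a + p)"
      have "L - 1 = p \<or> L - 1 = nx p" using pos_u[OF fp u m(1) m(2)] p dc by auto
      then have "p = L - 2" using p nxp by auto
      then show False using fp fg by simp
    qed
    moreover have "g \<noteq> ce es (a + p)"
    proof
      assume gp: "g = ce es (a + p)"
      have "d - 1 = p \<or> d - 1 = nx p" using pos_u[OF gp u m(3) m(4)] p dc by auto
      then have "p = d - 2" using p nxp pU dc by auto
      then show False using gp fg by simp
    qed
    moreover have "h \<noteq> ce es (a + p)"
    proof
      assume hp: "h = ce es (a + p)"
      have "0 = p \<or> 0 = nx p \<or> d = p \<or> d = nx p"
        using pos_2[OF hp, of 0 d] m(5,6) a0 p dc by auto
      then have "p = 0" using p nxp pU dc by auto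
      then show False using hp m(6) nb by simp
    qed
    moreover have "h2 \<noteq> ce es (a + p)"
    proof
      assume "h2 = ce es (a + p)"
      then have "L dvd (d - p)" unfolding h2_def ce_eq by simp
      then have "d - p = 0" using dvd_small0[of L "d - p"] p dc Lpos by auto
      then show False using pU by auto
    qed
    ultimately show "f \<noteq> ce es (a + p) \<and> g \<noteq> ce es (a + p) \<and> h \<noteq> ce es (a + p) \<and> h2 \<noteq> ce es (a + p)" by blast
  qed
qed

end


context cyc begin

lemma modI: "0 \<le> y \<Longrightarrow> y < L \<Longrightarrow> L dvd (x - y) \<Longrightarrow> x mod L = y"
  by (metis mod_eq_dvd_iff mod_pos_pos_trivial)

lemma dvd_dj: "L dvd (j - (i + (j - i) mod L))"
proof -
  have "j - (i + (j - i) mod L) = (j - i) - (j - i) mod L" by simp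
  then show ?thesis by (metis dvd_minus_mod)
qed

lemma onseg_eval:
  assumes d: "d = (j - i) mod L" "2 \<le> d" "d \<le> L - 2" and c: "1 \<le> c" "c \<le> L - 1" "c \<noteq> d"
  shows "on_seg L i (i + c) j \<longleftrightarrow> c < d" "on_seg L j (i + c) i \<longleftrightarrow> d < c"
proof -
  have jd: "L dvd (j - (i + d))" using dvd_dj d(1) by simp
  have m1: "i mod L \<noteq> (i + c) mod L"
  proof
    assume "i mod L = (i + c) mod L"
    then have "L dvd (i - (i + c))" by (simp add: mod_eq_dvd_iff)
    then have "i - (i + c) = 0" using dvd_small0[of L "i - (i + c)"] c Lpos by auto
    then show False using c by simp
  qed
  have m2: "(i + c) mod L \<noteq> j mod L"
  proof
    assume "(i + c) mod L = j mod L"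
    then have "L dvd ((i + c) - j)" by (simp add: mod_eq_dvd_iff)
    then have "L dvd (((i + c) - j) + (j - (i + d)))" using jd dvd_add by blast
    then have "L dvd (c - d)" by simp
    then have "c - d = 0" using dvd_small0[of L "c - d"] c d Lpos by auto
    then show False using c by simp
  qed
  have m3: "i mod L \<noteq> j mod L"
  proof
    assume "i mod L = j mod L"
    then have "L dvd (i - j)" by (simp add: mod_eq_dvd_iff)
    then have "L dvd ((i - j) + (j - (i + d)))" using jd dvd_add by blast
    then have "L dvd (- d)" by simp
    then have "- d = 0" using dvd_small0[of L "- d"] d Lpos by auto
    then show False using d by simp
  qed
  have e1: "(i + c - i) mod L = c" using c by (simp add: modI)
  show "on_seg L i (i + c) j \<longleftrightarrow> c < d" unfolding on_seg_def using m1 m2 m3 e1 d(1) by simp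
  have e2: "(i - j) mod L = L - d"
  proof (rule modI)
    show "0 \<le> L - d" "L - d < L" using d by auto
    have "i - j - (L - d) = - ((j - (i + d)) + L)" by simp
    moreover have "L dvd ((j - (i + d)) + L)" using jd by simp
    ultimately show "L dvd (i - j - (L - d))" by (metis dvd_minus_iff)
  qed
  have e3: "(i + c - j) mod L = (if d < c then c - d else c - d + L)"
  proof (cases "d < c")
    case True
    have "(i + c - j) mod L = c - d"
    proof (rule modI)
      show "0 \<le> c - d" "c - d < L" using True c d by auto
      have "i + c - j - (c - d) = - (j - (i + d))" by simp
      then show "L dvd (i + c - j - (c - d))" using jd by (metis dvd_minus_iff)
    qed
    then show ?thesis using True by simp
  next
    case False
    have "(i + c - j) mod L = c - d + L"
    proof (rule modI)
      show "0 \<le> c - d + L" "c - d + L < L" using False c d by auto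
      have "i + c - j - (c - d + L) = - ((j - (i + d)) + L)" by simp
      moreover have "L dvd ((j - (i + d)) + L)" using jd by simp
      ultimately show "L dvd (i + c - j - (c - d + L))" by (metis dvd_minus_iff)
    qed
    then show ?thesis using False by simp
  qed
  have m2': "j mod L \<noteq> (i + c) mod L" using m2 by simp
  have "(i + c - j) mod L < (i - j) mod L \<longleftrightarrow> d < c" using e2 e3 c d by auto
  then show "on_seg L j (i + c) i \<longleftrightarrow> d < c" unfolding on_seg_def using m1 m2' m3 by simp
qed

lemma bridge_sym: "bridge vs es i j k e \<longleftrightarrow> bridge vs es j i k e"
  unfolding bridge_def by blast

lemma bridge_cong:
  assumes "L dvd (k - k')"
  shows "bridge vs es i j k e \<longleftrightarrow> bridge vs es i j k' e"
proof -
  have v: "cv vs (k + x) = cv vs (k' + x)" for x unfolding cv_eq using assms by simp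
  have v2: "cv vs (k - x) = cv vs (k' - x)" for x unfolding cv_eq using assms by (simp add: algebra_simps)
  have v0: "cv vs k = cv vs k'" unfolding cv_eq using assms by simp
  have e: "ce es (k + x) = ce es (k' + x)" for x unfolding ce_eq using assms by simp
  have e2: "ce es (k - x) = ce es (k' - x)" for x unfolding ce_eq using assms by (simp add: algebra_simps)
  have s: "on_seg L a k b \<longleftrightarrow> on_seg L a k' b" for a b
  proof -
    have "k mod L = k' mod L" using assms by (simp add: mod_eq_dvd_iff)
    moreover have "(k - a) mod L = (k' - a) mod L" using assms by (simp add: mod_eq_dvd_iff)
    ultimately show ?thesis unfolding on_seg_def by simp
  qed
  have r: "cv vs (k + 1) = cv vs (k' + 1)" "cv vs (k + 2) = cv vs (k' + 2)" "cv vs (k - 1) = cv vs (k' - 1)"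
    "ce es (k + 1) = ce es (k' + 1)" "ce es (k - 1) = ce es (k' - 1)"
    using v v2 e e2 by blast+
  show ?thesis unfolding bridge_def by (simp only: r v0 s)
qed

end

locale cycU = cyc +
  fixes u U
  assumes unot: "u \<notin> set vs" and us: "usable E vs es u U"
begin

lemma pair_setup:
  assumes ab: "a \<in> {0..<L}" "b \<in> {0..<L}" "a \<noteq> b" "cv vs a \<in> U" "cv vs b \<in> U"
  defines "d \<equiv> (b - a) mod L"
  shows "2 \<le> d \<and> d \<le> L - 2 \<and> L dvd (b - (a + d)) \<and>
    (\<exists>f g. f \<in> E \<and> g \<in> E \<and> u \<in> f \<and> cv vs (a + (L - 1)) \<in> f \<and> u \<in> g \<and> cv vs (a + (d - 1)) \<in> g \<and>
       f \<noteq> g \<and> f \<noteq> ce es (a + (L - 2)) \<and> g \<noteq> ce es (a + (d - 2)))"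
proof -
  have jd: "L dvd (b - (a + d))" using dvd_dj unfolding d_def by simp
  have d0: "0 \<le> d" "d < L" unfolding d_def using Lpos by auto
  have nc: "b \<noteq> (a + 1) mod L \<and> a \<noteq> (b + 1) mod L" using us ab unfolding usable_def by blast
  have "d \<noteq> 0"
  proof
    assume "d = 0" then have "L dvd (b - a)" using jd by simp
    then have "b - a = 0" using dvd_small0[of L "b - a"] ab Lpos by auto
    then show False using ab by simp
  qed
  moreover have "d \<noteq> 1"
  proof
    assume "d = 1" then have "b mod L = (a + 1) mod L" using jd by (simp add: mod_eq_dvd_iff)
    then show False using nc ab by simp
  qed
  moreover have "d \<noteq> L - 1"
  proof
    assume "d = L - 1"
    have "L dvd ((b - (a + d)) + L)" using jd by simp
    moreover have "(b - (a + d)) + L = b + 1 - a" using \<open>d = L - 1\<close> by simp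
    ultimately have "L dvd (b + 1 - a)" by simp
    then have "a mod L = (b + 1) mod L" by (simp add: mod_eq_dvd_iff dvd_diff_commute)
    then show False using nc ab by simp
  qed
  ultimately have d2: "2 \<le> d" "d \<le> L - 2" using d0 by auto
  obtain f g where fg: "f \<in> edges_with E u (cv vs (a - 1)) - {ce es (a - 2)}"
      "g \<in> edges_with E u (cv vs (b - 1)) - {ce es (b - 2)}" "f \<noteq> g"
    using us ab unfolding usable_def by blast
  have c1: "cv vs (a - 1) = cv vs (a + (L - 1))" unfolding cv_eq by simp
  have c2: "ce es (a - 2) = ce es (a + (L - 2))" unfolding ce_eq by simp
  have c3: "cv vs (b - 1) = cv vs (a + (d - 1))" unfolding cv_eq using jd by (simp add: algebra_simps)
  have c4: "ce es (b - 2) = ce es (a + (d - 2))" unfolding ce_eq using jd by (simp add: algebra_simps)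
  show ?thesis using d2 jd fg c1 c2 c3 c4 unfolding edges_with_def by auto
qed

lemma Qbridge:
  assumes ab: "a \<in> {0..<L}" "b \<in> {0..<L}" "a \<noteq> b" "cv vs a \<in> U" "cv vs b \<in> U"
    and dd: "d = (b - a) mod L"
    and c: "d + 1 \<le> c" "c \<le> L - 2"
    and h: "h1 \<in> E" "cv vs a \<in> h1" "cv vs (a + c) \<in> h1" "h2 \<in> E" "cv vs b \<in> h2" "cv vs (a + (c + 1)) \<in> h2"
    and ex: "cv vs (a + c) \<notin> ce es a" "cv vs (a + (c + 1)) \<notin> ce es b"
  shows "\<exists>e. bridge vs es a b (a + c) e"
proof -
  obtain f g where S: "2 \<le> d" "d \<le> L - 2" "L dvd (b - (a + d))"
    "f \<in> E" "g \<in> E" "u \<in> f" "cv vs (a + (L - 1)) \<in> f" "u \<in> g" "cv vs (a + (d - 1)) \<in> g"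
    "f \<noteq> g" "f \<noteq> ce es (a + (L - 2))" "g \<noteq> ce es (a + (d - 2))"
    using pair_setup[OF ab] dd by blast
  have vb: "cv vs b = cv vs (a + d)" unfolding cv_eq using S(3) by simp
  have eb: "ce es b = ce es (a + d)" unfolding ce_eq using S(3) by simp
  have Q: "ce es (a + (c - 1)) = {cv vs a, cv vs (a + c), cv vs (a + (c - 1))} \<or>
         ce es (a + (c + 1)) = {cv vs (a + d), cv vs (a + (c + 1)), cv vs (a + (c + 2))}"
    using Qlemma[OF unot, of d c f g h1 h2 a] S h ex c vb eb by auto
  have os: "on_seg L b (a + c) a" using onseg_eval(2)[of d b a c] dd S c by auto
  have r1: "a + (c - 1) = a + c - 1" "a + (c + 1) = a + c + 1" "a + (c + 2) = a + c + 2" by simp_all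
  have Q2: "ce es (a + c - 1) = {cv vs a, cv vs (a + c), cv vs (a + c - 1)} \<or>
         ce es (a + c + 1) = {cv vs b, cv vs (a + c + 1), cv vs (a + c + 2)}"
    using Q unfolding r1 vb by blast
  then show ?thesis
  proof
    assume q: "ce es (a + c - 1) = {cv vs a, cv vs (a + c), cv vs (a + c - 1)}"
    show ?thesis unfolding bridge_def by (rule exI[of _ "ce es (a + c - 1)"]) (use q os in blast)
  next
    assume q: "ce es (a + c + 1) = {cv vs b, cv vs (a + c + 1), cv vs (a + c + 2)}"
    show ?thesis unfolding bridge_def by (rule exI[of _ "ce es (a + c + 1)"]) (use q os in blast)
  qed
qed

end


context cyc begin

lemma card_N:
  "card {c \<in> {0..<L}. cv vs (a + c) \<in> S} = card (S \<inter> set vs)"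
proof -
  have b: "bij_betw (\<lambda>c. cv vs (a + c)) {0..<L} (set vs)" using bij_off .
  have "(\<lambda>c. cv vs (a + c)) ` {c \<in> {0..<L}. cv vs (a + c) \<in> S} = S \<inter> set vs"
  proof
    show "(\<lambda>c. cv vs (a + c)) ` {c \<in> {0..<L}. cv vs (a + c) \<in> S} \<subseteq> S \<inter> set vs" using cv_in by auto
    show "S \<inter> set vs \<subseteq> (\<lambda>c. cv vs (a + c)) ` {c \<in> {0..<L}. cv vs (a + c) \<in> S}"
    proof
      fix x assume x: "x \<in> S \<inter> set vs"
      then obtain c where "c \<in> {0..<L}" "cv vs (a + c) = x" using cv_off_surj by blast
      then show "x \<in> (\<lambda>c. cv vs (a + c)) ` {c \<in> {0..<L}. cv vs (a + c) \<in> S}" using x by auto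
    qed
  qed
  moreover have "inj_on (\<lambda>c. cv vs (a + c)) {c \<in> {0..<L}. cv vs (a + c) \<in> S}"
    using b unfolding bij_betw_def by (auto intro: inj_on_subset)
  ultimately show ?thesis by (metis card_image)
qed

lemma binfo:
  assumes d: "d = (j - i) mod L" "2 \<le> d" "d \<le> L - 2" and jd: "L dvd (j - (i + d))"
    and c: "(1 \<le> c \<and> c \<le> d - 2) \<or> (d + 1 \<le> c \<and> c \<le> L - 2)"
    and br: "bridge vs es i j (i + c) e"
  shows "\<exists>p x. e = ce es (i + p) \<and> 0 \<le> p \<and> p \<le> L - 1 \<and> cv vs (i + x) \<in> e \<and> (x = 0 \<or> x = d) \<and>
     x \<noteq> p \<and> x \<noteq> nx p \<and>
     ((p = c + 1 \<and> ((c \<le> d - 2 \<and> x = 0) \<or> (d + 1 \<le> c \<and> x = d))) \<or>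
      (p = c - 1 \<and> ((c \<le> d - 2 \<and> x = d) \<or> (d + 1 \<le> c \<and> x = 0))))"
proof -
  have c1: "1 \<le> c" "c \<le> L - 1" "c \<noteq> d" using c d by auto
  have vj: "cv vs j = cv vs (i + d)" unfolding cv_eq using jd by simp
  have r1: "i + c + 1 = i + (c + 1)" "i + c - 1 = i + (c - 1)" by simp_all
  have i0: "cv vs (i + 0) = cv vs i" by simp
  show ?thesis
  proof (cases "c < d")
    case True
    have os: "on_seg L i (i + c) j" "\<not> on_seg L j (i + c) i" using onseg_eval[OF d c1] True by auto
    have nx1: "nx (c + 1) = c + 2" "nx (c - 1) = c" using True c d unfolding nx_def by auto
    from br os have "(e = ce es (i + c + 1) \<and> ce es (i + c + 1) = {cv vs i, cv vs (i + c + 1), cv vs (i + c + 2)}) \<or>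
       (e = ce es (i + c - 1) \<and> ce es (i + c - 1) = {cv vs j, cv vs (i + c), cv vs (i + c - 1)})"
      unfolding bridge_def by blast
    then show ?thesis
    proof
      assume h: "e = ce es (i + c + 1) \<and> ce es (i + c + 1) = {cv vs i, cv vs (i + c + 1), cv vs (i + c + 2)}"
      show ?thesis
        by (rule exI[of _ "c + 1"], rule exI[of _ 0]) (use h True c d nx1 r1 i0 in simp)
    next
      assume h: "e = ce es (i + c - 1) \<and> ce es (i + c - 1) = {cv vs j, cv vs (i + c), cv vs (i + c - 1)}"
      show ?thesis
        by (rule exI[of _ "c - 1"], rule exI[of _ d]) (use h True c d nx1 r1 vj in simp)
    qed
  next
    case False
    then have T: "d < c" using c1 by simp
    have os: "\<not> on_seg L i (i + c) j" "on_seg L j (i + c) i" using onseg_eval[OF d c1] T by auto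
    have nx1: "nx (c + 1) \<noteq> d" "nx (c - 1) = c" using T c d unfolding nx_def by auto
    from br os have "(e = ce es (i + c - 1) \<and> ce es (i + c - 1) = {cv vs i, cv vs (i + c), cv vs (i + c - 1)}) \<or>
       (e = ce es (i + c + 1) \<and> ce es (i + c + 1) = {cv vs j, cv vs (i + c + 1), cv vs (i + c + 2)})"
      unfolding bridge_def by blast
    then show ?thesis
    proof
      assume h: "e = ce es (i + c - 1) \<and> ce es (i + c - 1) = {cv vs i, cv vs (i + c), cv vs (i + c - 1)}"
      show ?thesis
        by (rule exI[of _ "c - 1"], rule exI[of _ 0]) (use h T c d nx1 r1 i0 in simp)
    next
      assume h: "e = ce es (i + c + 1) \<and> ce es (i + c + 1) = {cv vs j, cv vs (i + c + 1), cv vs (i + c + 2)}"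
      show ?thesis
        by (rule exI[of _ "c + 1"], rule exI[of _ d]) (use h T c d nx1 r1 vj in simp)
    qed
  qed
qed

lemma arith_binj:
  fixes c c' d p x :: int
  assumes "(p = c + 1 \<and> ((c \<le> d - 2 \<and> x = 0) \<or> (d + 1 \<le> c \<and> x = d))) \<or>
      (p = c - 1 \<and> ((c \<le> d - 2 \<and> x = d) \<or> (d + 1 \<le> c \<and> x = 0)))"
    "(p = c' + 1 \<and> ((c' \<le> d - 2 \<and> x = 0) \<or> (d + 1 \<le> c' \<and> x = d))) \<or>
      (p = c' - 1 \<and> ((c' \<le> d - 2 \<and> x = d) \<or> (d + 1 \<le> c' \<and> x = 0)))"
    "2 \<le> d"
  shows "c = c'"
  using assms by (elim disjE conjE) linarith+

lemma binj:
  assumes d: "d = (j - i) mod L" "2 \<le> d" "d \<le> L - 2" and jd: "L dvd (j - (i + d))"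
    and c: "(1 \<le> c \<and> c \<le> d - 2) \<or> (d + 1 \<le> c \<and> c \<le> L - 2)"
    and c': "(1 \<le> c' \<and> c' \<le> d - 2) \<or> (d + 1 \<le> c' \<and> c' \<le> L - 2)"
    and br: "bridge vs es i j (i + c) e" "bridge vs es i j (i + c') e"
  shows "c = c'"
proof -
  obtain p x where P1: "e = ce es (i + p)" "0 \<le> p" "p \<le> L - 1" "cv vs (i + x) \<in> e" "x = 0 \<or> x = d"
     "x \<noteq> p" "x \<noteq> nx p" and P2:
     "(p = c + 1 \<and> ((c \<le> d - 2 \<and> x = 0) \<or> (d + 1 \<le> c \<and> x = d))) \<or>
      (p = c - 1 \<and> ((c \<le> d - 2 \<and> x = d) \<or> (d + 1 \<le> c \<and> x = 0)))"
    using binfo[OF d jd c br(1)] by blast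
  obtain p' x' where P1': "e = ce es (i + p')" "0 \<le> p'" "p' \<le> L - 1" "cv vs (i + x') \<in> e" "x' = 0 \<or> x' = d"
     "x' \<noteq> p'" "x' \<noteq> nx p'" and P2':
     "(p' = c' + 1 \<and> ((c' \<le> d - 2 \<and> x' = 0) \<or> (d + 1 \<le> c' \<and> x' = d))) \<or>
      (p' = c' - 1 \<and> ((c' \<le> d - 2 \<and> x' = d) \<or> (d + 1 \<le> c' \<and> x' = 0)))"
    using binfo[OF d jd c' br(2)] by blast
  have pp: "p = p'"
  proof (rule ccontr)
    assume "p \<noteq> p'"
    then have "ce es (i + p) \<noteq> ce es (i + p')" using ce_ne_off P1(2,3) P1'(2,3) by auto
    then show False using P1(1) P1'(1) by simp
  qed
  have xx': "x = x'"
  proof (rule ccontr)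
    assume ne: "x \<noteq> x'"
    have m: "cv vs (i + p) \<in> e" "cv vs (i + nx p) \<in> e" using ce_mem_nx[of p i] P1 by auto
    have n: "0 \<le> nx p" "nx p < L" "nx p \<noteq> p" using nx_range P1 by auto
    have xr: "0 \<le> x" "x < L" "0 \<le> x'" "x' < L" using P1(5) P1'(5) d by auto
    have "e \<in> E" using P1(1) ce_in by simp
    from four_v[OF this P1(4) P1'(4) m, of] xr n P1(2,3,6,7) P1'(6,7) pp ne
    show False by auto
  qed
  show ?thesis using arith_binj[OF P2 P2'[unfolded pp[symmetric] xx'[symmetric]] d(2)] .
qed

end


context cycU begin

lemma part_c:
  assumes ij: "i \<in> {0..<L}" "j \<in> {0..<L}" "i \<noteq> j" "cv vs i \<in> U" "cv vs j \<in> U"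
  shows "int (card (bridges vs es i j)) \<ge> int (degC V E vs (cv vs i)) + int (degC V E vs (cv vs j)) - L - 4"
proof -
  define d where "d = (j - i) mod L"
  have S: "2 \<le> d" "d \<le> L - 2" "L dvd (j - (i + d))" using pair_setup[OF ij] unfolding d_def by auto
  have vj: "cv vs j = cv vs (i + d)" unfolding cv_eq using S by simp
  have S4: "L dvd (j + L - (d + i))"
  proof -
    have e: "j + L - (d + i) = (j - (i + d)) + L" by simp
    show ?thesis unfolding e by (rule dvd_add[OF S(3) dvd_refl])
  qed
  have ej: "ce es j = ce es (i + d)" unfolding ce_eq using S by simp
  have ji: "(i - j) mod L = L - d"
  proof (rule modI)
    show "0 \<le> L - d" "L - d < L" using S by auto
    have "i - j - (L - d) = - ((j - (i + d)) + L)" by simp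
    moreover have "L dvd ((j - (i + d)) + L)" using S by simp
    ultimately show "L dvd (i - j - (L - d))" by (metis dvd_minus_iff)
  qed
  define Ni where "Ni = {c \<in> {0..<L}. cv vs (i + c) \<in> nbhd V E (cv vs i)}"
  define Nj where "Nj = {c \<in> {0..<L}. cv vs (i + c) \<in> nbhd V E (cv vs j)}"
  have cNi: "card Ni = degC V E vs (cv vs i)" unfolding Ni_def degC_def by (rule card_N)
  have cNj: "card Nj = degC V E vs (cv vs j)" unfolding Nj_def degC_def by (rule card_N)
  have "Ni \<subseteq> {0..<L}" "Nj \<subseteq> {0..<L}" unfolding Ni_def Nj_def by auto
  then have finNi: "finite Ni" "finite Nj" using finite_subset by auto
  have Ni0: "0 \<notin> Ni" unfolding Ni_def nbhd_def by simp
  have Njd: "d \<notin> Nj" unfolding Nj_def nbhd_def using vj by simp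
  define D where "D = {1..d-2} \<union> {d+1..L-2}"
  have finD: "finite D" unfolding D_def by simp
  have cD: "int (card D) = L - 4"
  proof -
    have "card D = card {1..d-2} + card {d+1..L-2}"
      unfolding D_def by (rule card_Un_disjoint) auto
    then show ?thesis using S by simp
  qed
  define \<phi> where "\<phi> c = (if c \<le> d - 2 then c + 1 else c)" for c :: int
  define \<psi> where "\<psi> c = (if c \<le> d - 2 then c else c + 1)" for c :: int
  define A where "A = {c \<in> D. \<phi> c \<in> Ni}"
  define B where "B = {c \<in> D. \<psi> c \<in> Nj}"
  have finAB: "finite A" "finite B" unfolding A_def B_def using finD by auto
  have cA: "int (card A) \<ge> int (card Ni) - 3"
  proof -
    have sub: "Ni - {1, d, L - 1} \<subseteq> \<phi> ` A"
    proof
      fix m assume m: "m \<in> Ni - {1, d, L - 1}"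
      have m0: "0 \<le> m" "m < L" "m \<noteq> 0" using m Ni0 unfolding Ni_def by auto
      show "m \<in> \<phi> ` A"
      proof (cases "m \<le> d - 1")
        case True
        then have "m - 1 \<in> A" "\<phi> (m - 1) = m" using m m0 S unfolding A_def D_def \<phi>_def by auto
        then show ?thesis by (metis image_eqI)
      next
        case False
        then have "m \<in> A" "\<phi> m = m" using m m0 S unfolding A_def D_def \<phi>_def by auto
        then show ?thesis by (metis image_eqI)
      qed
    qed
    have "card Ni - card {1, d, L - 1} \<le> card (Ni - {1, d, L - 1})" by (rule diff_card_le_card_Diff) simp
    moreover have "card {1, d, L - 1} \<le> 3" by (simp add: card_insert_if)
    moreover have "card (Ni - {1, d, L - 1}) \<le> card (\<phi> ` A)" using sub finAB by (simp add: card_mono)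
    moreover have "card (\<phi> ` A) \<le> card A" using finAB by (simp add: card_image_le)
    ultimately show ?thesis by linarith
  qed
  have cB: "int (card B) \<ge> int (card Nj) - 3"
  proof -
    have sub: "Nj - {0, d - 1, d + 1} \<subseteq> \<psi> ` B"
    proof
      fix m assume m: "m \<in> Nj - {0, d - 1, d + 1}"
      have m0: "0 \<le> m" "m < L" "m \<noteq> d" using m Njd unfolding Nj_def by auto
      show "m \<in> \<psi> ` B"
      proof (cases "m \<le> d - 2")
        case True
        then have "m \<in> B" "\<psi> m = m" using m m0 S unfolding B_def D_def \<psi>_def by auto
        then show ?thesis by (metis image_eqI)
      next
        case False
        then have "m - 1 \<in> B" "\<psi> (m - 1) = m" using m m0 S unfolding B_def D_def \<psi>_def by auto
        then show ?thesis by (metis image_eqI)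
      qed
    qed
    have "card Nj - card {0, d - 1, d + 1} \<le> card (Nj - {0, d - 1, d + 1})" by (rule diff_card_le_card_Diff) simp
    moreover have "card {0, d - 1, d + 1} \<le> 3" by (simp add: card_insert_if)
    moreover have "card (Nj - {0, d - 1, d + 1}) \<le> card (\<psi> ` B)" using sub finAB by (simp add: card_mono)
    moreover have "card (\<psi> ` B) \<le> card B" using finAB by (simp add: card_image_le)
    ultimately show ?thesis by linarith
  qed
  have cAB: "int (card (A \<inter> B)) \<ge> int (card A) + int (card B) - (L - 4)"
  proof -
    have "card A + card B = card (A \<union> B) + card (A \<inter> B)" using finAB by (rule card_Un_Int)
    moreover have "card (A \<union> B) \<le> card D" using finD unfolding A_def B_def by (intro card_mono) auto
    ultimately show ?thesis using cD by linarith
  qed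
  define Ei where "Ei = {c \<in> D. cv vs (i + \<phi> c) \<in> ce es i}"
  define Ej where "Ej = {c \<in> D. cv vs (i + \<psi> c) \<in> ce es j}"
  have cEi: "card Ei \<le> 1"
  proof -
    have "\<forall>c\<in>Ei. \<forall>c'\<in>Ei. c = c'"
    proof (intro ballI, rule ccontr)
      fix c c' assume cc: "c \<in> Ei" "c' \<in> Ei" "c \<noteq> c'"
      have r: "2 \<le> \<phi> c" "\<phi> c \<le> L - 2" "2 \<le> \<phi> c'" "\<phi> c' \<le> L - 2" "\<phi> c \<noteq> \<phi> c'"
        using cc S unfolding Ei_def D_def \<phi>_def by (auto split: if_splits)
      have m: "cv vs (i + 0) \<in> ce es i" "cv vs (i + 1) \<in> ce es i" using cyc1 cyc2 by simp_all
      show False using four_v[of "ce es i" i 0 1 "\<phi> c" "\<phi> c'"] m cc r ce_in unfolding Ei_def by auto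
    qed
    then show ?thesis using finD unfolding Ei_def by (simp add: card_le_Suc0_iff_eq)
  qed
  have cEj: "card Ej \<le> 1"
  proof -
    have "\<forall>c\<in>Ej. \<forall>c'\<in>Ej. c = c'"
    proof (intro ballI, rule ccontr)
      fix c c' assume cc: "c \<in> Ej" "c' \<in> Ej" "c \<noteq> c'"
      have r: "1 \<le> \<psi> c" "\<psi> c \<le> L - 1" "1 \<le> \<psi> c'" "\<psi> c' \<le> L - 1" "\<psi> c \<noteq> \<psi> c'"
        "\<psi> c \<noteq> d" "\<psi> c \<noteq> d + 1" "\<psi> c' \<noteq> d" "\<psi> c' \<noteq> d + 1"
        using cc S unfolding Ej_def D_def \<psi>_def by (auto split: if_splits)
      have m: "cv vs (i + d) \<in> ce es j" "cv vs (i + (d + 1)) \<in> ce es j" using ce_mem_nx[of d i] S ej unfolding nx_def by auto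
      show False using four_v[of "ce es j" i d "d + 1" "\<psi> c" "\<psi> c'"] m cc r ce_in S unfolding Ej_def by auto
    qed
    then show ?thesis using finD unfolding Ej_def by (simp add: card_le_Suc0_iff_eq)
  qed
  define X where "X = (A \<inter> B) - Ei - Ej"
  have finX: "finite X" unfolding X_def using finAB by auto
  have cX: "int (card X) \<ge> int (card (A \<inter> B)) - 2"
  proof -
    have "card (A \<inter> B) \<le> card X + card Ei + card Ej"
    proof -
      have "A \<inter> B \<subseteq> X \<union> Ei \<union> Ej" unfolding X_def by auto
      then have "card (A \<inter> B) \<le> card (X \<union> Ei \<union> Ej)" using finX finD
        unfolding Ei_def Ej_def by (intro card_mono) auto
      also have "\<dots> \<le> card X + card Ei + card Ej" by (metis card_Un_le add_le_mono le_refl order_trans)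
      finally show ?thesis .
    qed
    then show ?thesis using cEi cEj by linarith
  qed
  have exb: "\<exists>e. bridge vs es i j (i + c) e" if cX: "c \<in> X" for c
  proof -
    have cD': "c \<in> D" "\<phi> c \<in> Ni" "\<psi> c \<in> Nj" "c \<notin> Ei" "c \<notin> Ej" using cX unfolding X_def A_def B_def by auto
    have adj: "\<exists>h\<in>E. x \<in> h \<and> y \<in> h" if "x \<in> nbhd V E y" for x y
      using that unfolding nbhd_def adjacent_def edges_with_def by blast
    show ?thesis
    proof (cases "c \<le> d - 2")
      case True
      have c1: "1 \<le> c" "c \<le> d - 2" using cD' True unfolding D_def by auto
      have n1: "cv vs (i + (c + 1)) \<in> nbhd V E (cv vs i)" "cv vs (i + c) \<in> nbhd V E (cv vs j)"
        using cD' True unfolding Ni_def Nj_def \<phi>_def \<psi>_def by auto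
      have x1: "cv vs (i + (c + 1)) \<notin> ce es i" "cv vs (i + c) \<notin> ce es j"
        using cD' True unfolding Ei_def Ej_def \<phi>_def \<psi>_def by auto
      define c' where "c' = c - d + L"
      have eqv: "cv vs (j + c') = cv vs (i + c)" "cv vs (j + (c' + 1)) = cv vs (i + (c + 1))"
        unfolding cv_eq c'_def using S4 by (simp_all add: algebra_simps)
      obtain h1 where h1: "h1 \<in> E" "cv vs j \<in> h1" "cv vs (j + c') \<in> h1" using adj[OF n1(2)] eqv by auto
      obtain h2 where h2: "h2 \<in> E" "cv vs i \<in> h2" "cv vs (j + (c' + 1)) \<in> h2" using adj[OF n1(1)] eqv by auto
      have "\<exists>e. bridge vs es j i (j + c') e"
        using Qbridge[of j i "L - d" c' h1 h2] ij ji h1 h2 x1 eqv c1 S unfolding c'_def by auto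
      then obtain e where "bridge vs es j i (j + c') e" by blast
      moreover have "L dvd ((j + c') - (i + c))" unfolding c'_def using S4 by (simp add: algebra_simps)
      ultimately have "bridge vs es i j (i + c) e" using bridge_cong bridge_sym by blast
      then show ?thesis by blast
    next
      case False
      have c1: "d + 1 \<le> c" "c \<le> L - 2" using cD' False S unfolding D_def by auto
      have n1: "cv vs (i + c) \<in> nbhd V E (cv vs i)" "cv vs (i + (c + 1)) \<in> nbhd V E (cv vs j)"
        using cD' False unfolding Ni_def Nj_def \<phi>_def \<psi>_def by auto
      have x1: "cv vs (i + c) \<notin> ce es i" "cv vs (i + (c + 1)) \<notin> ce es j"
        using cD' False unfolding Ei_def Ej_def \<phi>_def \<psi>_def by auto
      obtain h1 where h1: "h1 \<in> E" "cv vs i \<in> h1" "cv vs (i + c) \<in> h1" using adj[OF n1(1)] by auto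
      obtain h2 where h2: "h2 \<in> E" "cv vs j \<in> h2" "cv vs (i + (c + 1)) \<in> h2" using adj[OF n1(2)] by auto
      show ?thesis using Qbridge[of i j d c h1 h2] ij h1 h2 x1 c1 d_def by auto
    qed
  qed
  define \<beta> where "\<beta> c = (SOME e. bridge vs es i j (i + c) e)" for c
  have \<beta>b: "bridge vs es i j (i + c) (\<beta> c)" if "c \<in> X" for c
    unfolding \<beta>_def using exb[OF that] by (rule someI_ex)
  have Xr: "(1 \<le> c \<and> c \<le> d - 2) \<or> (d + 1 \<le> c \<and> c \<le> L - 2)" if "c \<in> X" for c
    using that unfolding X_def A_def D_def by auto
  have Xd: "c \<noteq> d - 1" if "c \<in> X" for c using Xr[OF that] by auto
  have inj: "inj_on \<beta> X"
  proof (rule inj_onI)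
    fix c c' assume cc: "c \<in> X" "c' \<in> X" "\<beta> c = \<beta> c'"
    have "bridge vs es i j (i + c) (\<beta> c)" "bridge vs es i j (i + c') (\<beta> c)"
      using \<beta>b[OF cc(1)] \<beta>b[OF cc(2)] cc(3) by simp_all
    then show "c = c'" using binj[OF d_def S(1,2,3) Xr[OF cc(1)] Xr[OF cc(2)]] by blast
  qed
  have sub: "\<beta> ` X \<subseteq> bridges vs es i j"
  proof
    fix e assume "e \<in> \<beta> ` X"
    then obtain c where c: "c \<in> X" "e = \<beta> c" by blast
    define k where "k = (i + c) mod L"
    have k: "k \<in> {0..<L}" unfolding k_def using Lpos by simp
    have kd: "L dvd (k - (i + c))" unfolding k_def by (metis dvd_minus_mod dvd_diff_commute)
    have "k \<noteq> i"
    proof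
      assume "k = i"
      then have "L dvd (- c)" using kd by simp
      then show False using dvd_small0[of L "- c"] Xr[OF c(1)] Lpos S by auto
    qed
    moreover have "k \<noteq> j"
    proof
      assume "k = j"
      then have "L dvd ((k - (i + c)) - (j - (i + d)))" using kd S dvd_diff by blast
      then have "L dvd (d - c)" using \<open>k = j\<close> by simp
      then show False using dvd_small0[of L "d - c"] Xr[OF c(1)] S Lpos by auto
    qed
    moreover have "bridge vs es i j k e" using bridge_cong[OF kd] \<beta>b[OF c(1)] c by blast
    ultimately show "e \<in> bridges vs es i j" unfolding bridges_def using k by blast
  qed
  have finR: "finite (bridges vs es i j)"
  proof (rule finite_subset)
    show "bridges vs es i j \<subseteq> set es" unfolding bridges_def bridge_def using ce_in_set by auto
  qed simp
  have "card X \<le> card (bridges vs es i j)"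
    using card_image[OF inj] card_mono[OF finR sub] by simp
  then show ?thesis using cX cAB cA cB cNi cNj by linarith
qed

end


context cyc begin

lemma bthird:
  assumes d: "d = (j - i) mod L" "2 \<le> d" "d \<le> L - 2" and jd: "L dvd (j - (i + d))"
    and c: "1 \<le> c" "c \<le> L - 1" "c \<noteq> d"
    and br: "bridge vs es i j (i + c) e"
  shows "\<exists>p x. 0 \<le> p \<and> p < L \<and> e = ce es (i + p) \<and> (x = 0 \<or> x = d) \<and> cv vs (i + x) \<in> e \<and> x \<noteq> p \<and> x \<noteq> nx p"
proof -
  have vj: "cv vs j = cv vs (i + d)" unfolding cv_eq using jd by simp
  have r1: "i + c + 1 = i + (c + 1)" "i + c - 1 = i + (c - 1)" by simp_all
  have i0: "cv vs (i + 0) = cv vs i" by simp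
  show ?thesis
  proof (cases "c < d")
    case True
    have os: "on_seg L i (i + c) j" "\<not> on_seg L j (i + c) i" using onseg_eval[OF d c] True by auto
    have nx1: "nx (c + 1) = c + 2" "nx (c - 1) = c" using True c d unfolding nx_def by auto
    from br os have "(e = ce es (i + c + 1) \<and> ce es (i + c + 1) = {cv vs i, cv vs (i + c + 1), cv vs (i + c + 2)}) \<or>
       (e = ce es (i + c - 1) \<and> ce es (i + c - 1) = {cv vs j, cv vs (i + c), cv vs (i + c - 1)})"
      unfolding bridge_def by blast
    then show ?thesis
    proof
      assume h: "e = ce es (i + c + 1) \<and> ce es (i + c + 1) = {cv vs i, cv vs (i + c + 1), cv vs (i + c + 2)}"
      show ?thesis
        by (rule exI[of _ "c + 1"], rule exI[of _ 0]) (use h True c d nx1 r1 i0 in simp)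
    next
      assume h: "e = ce es (i + c - 1) \<and> ce es (i + c - 1) = {cv vs j, cv vs (i + c), cv vs (i + c - 1)}"
      show ?thesis
        by (rule exI[of _ "c - 1"], rule exI[of _ d]) (use h True c d nx1 r1 vj in simp)
    qed
  next
    case False
    then have T: "d < c" using c by simp
    have os: "\<not> on_seg L i (i + c) j" "on_seg L j (i + c) i" using onseg_eval[OF d c] T by auto
    have nx1: "nx (c - 1) = c" using T c d unfolding nx_def by auto
    from br os have "(e = ce es (i + c - 1) \<and> ce es (i + c - 1) = {cv vs i, cv vs (i + c), cv vs (i + c - 1)}) \<or>
       (e = ce es (i + c + 1) \<and> ce es (i + c + 1) = {cv vs j, cv vs (i + c + 1), cv vs (i + c + 2)})"
      unfolding bridge_def by blast
    then show ?thesis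
    proof
      assume h: "e = ce es (i + c - 1) \<and> ce es (i + c - 1) = {cv vs i, cv vs (i + c), cv vs (i + c - 1)}"
      show ?thesis
        by (rule exI[of _ "c - 1"], rule exI[of _ 0]) (use h T c d nx1 r1 i0 in simp)
    next
      assume h: "e = ce es (i + c + 1) \<and> ce es (i + c + 1) = {cv vs j, cv vs (i + c + 1), cv vs (i + c + 2)}"
      show ?thesis
      proof (cases "c = L - 1")
        case True
        have "ce es (i + c + 1) = ce es (i + 0)" unfolding ce_eq using True by simp
        moreover have "nx 0 = 1" unfolding nx_def using len2 by auto
        ultimately show ?thesis
          by (intro exI[of _ 0] exI[of _ d]) (use h T c d vj Lpos in auto)
      next
        case False
        have "nx (c + 1) \<noteq> d" using T c d False unfolding nx_def by auto
        then show ?thesis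
          by (intro exI[of _ "c + 1"] exI[of _ d]) (use h T c d False r1 vj in auto)
      qed
    qed
  qed
qed

definition third :: "'a set \<Rightarrow> int \<Rightarrow> bool" where
  "third e y \<longleftrightarrow> cv vs y \<in> e \<and> (\<forall>q. e = ce es q \<longrightarrow> cv vs y \<noteq> cv vs q \<and> cv vs y \<noteq> cv vs (q + 1))"

lemma third_unique:
  assumes "e \<in> set es" "third e y" "third e y'" "y \<in> {0..<L}" "y' \<in> {0..<L}"
  shows "y = y'"
proof (rule ccontr)
  assume ne: "y \<noteq> y'"
  obtain t where t: "t < length es" "es ! t = e" using assms(1) by (auto simp: in_set_conv_nth)
  have q: "e = ce es (int t)" unfolding ce_def using t by simp
  have m: "cv vs (int t) \<in> e" "cv vs (int t + 1) \<in> e" using cyc1 cyc2 q by auto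
  have n1: "cv vs (int t) \<noteq> cv vs (int t + 1)"
  proof
    assume "cv vs (int t) = cv vs (int t + 1)"
    then have "L dvd (-1)" unfolding cv_eq by simp
    then show False using len2 by simp
  qed
  have n2: "cv vs y \<noteq> cv vs y'" using cv_off_inj[of y y' 0] assms ne by auto
  show False using four[of e "cv vs (int t)" "cv vs (int t + 1)" "cv vs y" "cv vs y'"] m n1 n2 assms q
      ce_in unfolding third_def by metis
qed

end

context cycU begin

lemma bridge_third:
  assumes ab: "a \<in> {0..<L}" "b \<in> {0..<L}" "a \<noteq> b" "cv vs a \<in> U" "cv vs b \<in> U"
    and e: "e \<in> bridges vs es a b"
  shows "third e a \<or> third e b"
proof -
  define d where "d = (b - a) mod L"
  have S: "2 \<le> d" "d \<le> L - 2" "L dvd (b - (a + d))" using pair_setup[OF ab] unfolding d_def by auto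
  obtain k where k: "k \<in> {0..<L}" "k \<noteq> a" "k \<noteq> b" "bridge vs es a b k e" using e unfolding bridges_def by blast
  define c where "c = (k - a) mod L"
  have kc: "L dvd (k - (a + c))" unfolding c_def
    by (metis diff_diff_eq dvd_minus_mod)
  have c0: "0 \<le> c" "c < L" unfolding c_def using Lpos by auto
  have "c \<noteq> 0"
  proof
    assume "c = 0" then have "L dvd (k - a)" using kc by simp
    then show False using dvd_small0[of L "k - a"] k ab Lpos by auto
  qed
  moreover have "c \<noteq> d"
  proof
    assume "c = d"
    then have "L dvd ((k - (a + c)) - (b - (a + d)))" using kc S dvd_diff by blast
    then have "L dvd (k - b)" using \<open>c = d\<close> by simp
    then show False using dvd_small0[of L "k - b"] k ab Lpos by auto
  qed
  ultimately have c1: "1 \<le> c" "c \<le> L - 1" "c \<noteq> d" using c0 by auto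
  have br: "bridge vs es a b (a + c) e" using bridge_cong[OF kc] k by blast
  obtain p x where P: "0 \<le> p" "p < L" "e = ce es (a + p)" "x = 0 \<or> x = d" "cv vs (a + x) \<in> e" "x \<noteq> p" "x \<noteq> nx p"
    using bthird[OF d_def S(1,2,3) c1 br] by blast
  have xr: "0 \<le> x" "x < L" using P(4) S by auto
  have nxr: "0 \<le> nx p \<and> nx p < L" using nx_range P by auto
  have tx: "third e (a + x) \<longrightarrow> cv vs (a + x) = cv vs a \<or> cv vs (a + x) = cv vs b \<Longrightarrow> True" by simp
  have T: "cv vs (a + x) \<in> e \<and> (\<forall>q. e = ce es q \<longrightarrow> cv vs (a + x) \<noteq> cv vs q \<and> cv vs (a + x) \<noteq> cv vs (q + 1))"
  proof (intro conjI allI impI)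
    show "cv vs (a + x) \<in> e" using P by simp
    fix q assume q: "e = ce es q"
    then have "ce es q = ce es (a + p)" using P(3) by simp
    then have "L dvd (q - (a + p))" by (simp add: ce_eq)
    then have v1: "cv vs q = cv vs (a + p)" "cv vs (q + 1) = cv vs (a + p + 1)" unfolding cv_eq by (simp_all add: algebra_simps)
    have v2: "cv vs (a + p + 1) = cv vs (a + nx p)" unfolding cv_eq nx_def by auto
    show "cv vs (a + x) \<noteq> cv vs q" using v1 cv_ne_off[of x p a] xr P by auto
    show "cv vs (a + x) \<noteq> cv vs (q + 1)" using v1 v2 cv_ne_off[of x "nx p" a] xr nxr P by auto
  qed
  have vb: "cv vs b = cv vs (a + d)" unfolding cv_eq using S by simp
  show ?thesis
  proof (cases "x = 0")
    case True then show ?thesis using T unfolding third_def by simp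
  next
    case False then have "x = d" using P by simp
    then show ?thesis using T vb unfolding third_def by simp
  qed
qed

definition Pairs :: "int set \<Rightarrow> (int \<times> int) set" where
  "Pairs K = {p \<in> K \<times> K. fst p \<noteq> snd p}"

lemma card_Pairs: "finite K \<Longrightarrow> card (Pairs K) = card K * card K - card K"
proof -
  assume f: "finite K"
  have "Pairs K = K \<times> K - (\<lambda>x. (x, x)) ` K" unfolding Pairs_def by auto
  moreover have "card ((\<lambda>x. (x, x)) ` K) = card K" by (rule card_image) (auto simp: inj_on_def)
  moreover have "(\<lambda>x. (x, x)) ` K \<subseteq> K \<times> K" by auto
  ultimately show ?thesis using f by (simp add: card_Diff_subset card_cartesian_product)
qed

lemma pair_sum_upper:
  assumes K: "K \<subseteq> {0..<L}" "\<And>x. x \<in> K \<Longrightarrow> cv vs x \<in> U"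
  shows "(\<Sum>p\<in>Pairs K. card (bridges vs es (fst p) (snd p))) \<le> 2 * (card K - 1) * length vs"
proof -
  have finK: "finite K" using K(1) finite_subset by blast
  have finP: "finite (Pairs K)" unfolding Pairs_def using finK by auto
  have Rsub: "bridges vs es a b \<subseteq> set es" for a b
    unfolding bridges_def bridge_def using ce_in_set by auto
  have "(\<Sum>p\<in>Pairs K. card (bridges vs es (fst p) (snd p))) =
        (\<Sum>p\<in>Pairs K. \<Sum>e\<in>set es. if e \<in> bridges vs es (fst p) (snd p) then 1 else 0)"
  proof (rule sum.cong)
    fix p
    have "card (bridges vs es (fst p) (snd p)) = card (set es \<inter> bridges vs es (fst p) (snd p))"
      using Rsub by (metis inf.absorb2)
    also have "\<dots> = (\<Sum>e\<in>set es. if e \<in> bridges vs es (fst p) (snd p) then 1 else 0)"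
      by (simp add: sum.If_cases)
    finally show "card (bridges vs es (fst p) (snd p)) = (\<Sum>e\<in>set es. if e \<in> bridges vs es (fst p) (snd p) then 1 else 0)" .
  qed simp
  also have "\<dots> = (\<Sum>e\<in>set es. \<Sum>p\<in>Pairs K. if e \<in> bridges vs es (fst p) (snd p) then 1 else 0)"
    by (rule sum.swap)
  also have "\<dots> = (\<Sum>e\<in>set es. card {p \<in> Pairs K. e \<in> bridges vs es (fst p) (snd p)})"
    using finP by (simp add: sum.If_cases Int_def conj_commute)
  also have "\<dots> \<le> (\<Sum>e\<in>set es. 2 * (card K - 1))"
  proof (rule sum_mono)
    fix e assume e: "e \<in> set es"
    show "card {p \<in> Pairs K. e \<in> bridges vs es (fst p) (snd p)} \<le> 2 * (card K - 1)"
    proof (cases "\<exists>y\<in>K. third e y")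
      case False
      have "{p \<in> Pairs K. e \<in> bridges vs es (fst p) (snd p)} = {}"
      proof -
        have "False" if "p \<in> Pairs K" "e \<in> bridges vs es (fst p) (snd p)" for p
        proof -
          have "fst p \<in> K" "snd p \<in> K" "fst p \<noteq> snd p" using that unfolding Pairs_def by auto
          then show False using bridge_third[of "fst p" "snd p" e] K that False by blast
        qed
        then show ?thesis by blast
      qed
      then show ?thesis by (metis card.empty le0)
    next
      case True
      then obtain y where y: "y \<in> K" "third e y" by blast
      have sub: "{p \<in> Pairs K. e \<in> bridges vs es (fst p) (snd p)} \<subseteq> ({y} \<times> (K - {y})) \<union> ((K - {y}) \<times> {y})"
      proof
        fix p assume p: "p \<in> {p \<in> Pairs K. e \<in> bridges vs es (fst p) (snd p)}"
        have pk: "fst p \<in> K" "snd p \<in> K" "fst p \<noteq> snd p" using p unfolding Pairs_def by auto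
        have "third e (fst p) \<or> third e (snd p)" using bridge_third[of "fst p" "snd p" e] K pk p by blast
        then have "fst p = y \<or> snd p = y" using third_unique[OF e] y pk K by blast
        then show "p \<in> ({y} \<times> (K - {y})) \<union> ((K - {y}) \<times> {y})" using pk by (cases p) auto
      qed
      have "card ({y} \<times> (K - {y}) \<union> (K - {y}) \<times> {y}) \<le> card ({y} \<times> (K - {y})) + card ((K - {y}) \<times> {y})"
        by (rule card_Un_le)
      also have "\<dots> = 2 * (card K - 1)" using y finK by (simp add: card_cartesian_product)
      finally show ?thesis using card_mono[OF _ sub] finK by (meson finite_Diff finite_SigmaI finite_UnI finite.emptyI finite_insert order_trans)
    qed
  qed
  also have "\<dots> = 2 * (card K - 1) * length vs" using card_vs len_es des by (simp add: distinct_card)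
  finally show ?thesis .
qed

end


context cyc begin

lemma deg_bound: "deg V E v \<le> degC V E vs v + (card V - length vs)"
proof -
  have "nbhd V E v \<subseteq> (nbhd V E v \<inter> set vs) \<union> (V - set vs)" unfolding nbhd_def by auto
  then have "card (nbhd V E v) \<le> card ((nbhd V E v \<inter> set vs) \<union> (V - set vs))"
    using finV by (intro card_mono) (auto simp: nbhd_def)
  also have "\<dots> \<le> card (nbhd V E v \<inter> set vs) + card (V - set vs)" by (rule card_Un_le)
  also have "card (V - set vs) = card V - length vs" using setvs_V finV card_vs by (simp add: card_Diff_subset)
  finally show ?thesis unfolding deg_def degC_def .
qed

end

context cycU begin

lemma ptr:
  assumes ij: "i \<in> {0..<L}" "j \<in> {0..<L}" "i \<noteq> j" "cv vs i \<in> U" "cv vs j \<in> U"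
    and h: "h \<in> E" "cv vs i \<in> h" "cv vs j \<in> h"
  shows "cv vs j \<in> ce es i \<or> cv vs i \<in> ce es j"
proof -
  define d where "d = (j - i) mod L"
  obtain f g where S: "2 \<le> d" "d \<le> L - 2" "L dvd (j - (i + d))"
    "f \<in> E" "g \<in> E" "u \<in> f" "cv vs (i + (L - 1)) \<in> f" "u \<in> g" "cv vs (i + (d - 1)) \<in> g"
    "f \<noteq> g" "f \<noteq> ce es (i + (L - 2))" "g \<noteq> ce es (i + (d - 2))"
    using pair_setup[OF ij] unfolding d_def by blast
  have vj: "cv vs j = cv vs (i + d)" unfolding cv_eq using S by simp
  have ej: "ce es j = ce es (i + d)" unfolding ce_eq using S by simp
  show ?thesis using ClaimA[OF unot S(1,2,4,5) h(1) S(6,7,8,9) h(2)] h(3) vj ej S(10,11,12) by simp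
qed

lemma one_ptr:
  assumes "a \<in> {0..<L}" "b \<in> {0..<L}" "c \<in> {0..<L}" "a \<noteq> b" "a \<noteq> c" "b \<noteq> c"
    "cv vs a \<in> U" "cv vs b \<in> U" "cv vs c \<in> U" "cv vs b \<in> ce es a" "cv vs c \<in> ce es a"
  shows False
proof -
  have nc: "b \<noteq> (a + 1) mod L" "c \<noteq> (a + 1) mod L" using us assms unfolding usable_def by blast+
  have n1: "cv vs (a + 1) \<noteq> cv vs b"
  proof
    assume "cv vs (a + 1) = cv vs b"
    then have "(a + 1) mod L = b mod L" unfolding cv_eq by (simp add: mod_eq_dvd_iff)
    then show False using nc assms by simp
  qed
  have n2: "cv vs (a + 1) \<noteq> cv vs c"
  proof
    assume "cv vs (a + 1) = cv vs c"
    then have "(a + 1) mod L = c mod L" unfolding cv_eq by (simp add: mod_eq_dvd_iff)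
    then show False using nc assms by simp
  qed
  have n3: "cv vs a \<noteq> cv vs (a + 1)"
  proof
    assume "cv vs a = cv vs (a + 1)"
    then have "L dvd (-1)" unfolding cv_eq by simp
    then show False using len2 by simp
  qed
  have n4: "cv vs a \<noteq> cv vs b" "cv vs a \<noteq> cv vs c" "cv vs b \<noteq> cv vs c"
    using cv_off_inj[of _ _ 0] assms by (metis add_0)+
  show False using four[of "ce es a" "cv vs a" "cv vs (a + 1)" "cv vs b" "cv vs c"] cyc1 cyc2 ce_in
      assms n1 n2 n3 n4 by metis
qed

lemma pointer_bound:
  assumes K: "K \<subseteq> {0..<L}" "\<And>x. x \<in> K \<Longrightarrow> cv vs x \<in> U"
    and adj: "\<And>x y. x \<in> K \<Longrightarrow> y \<in> K \<Longrightarrow> x \<noteq> y \<Longrightarrow> \<exists>h\<in>E. cv vs x \<in> h \<and> cv vs y \<in> h"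
  shows "card K \<le> 3"
proof -
  have finK: "finite K" using K(1) finite_subset by blast
  define Q where "Q = {p \<in> Pairs K. cv vs (snd p) \<in> ce es (fst p)}"
  have "Pairs K \<subseteq> Q \<union> prod.swap ` Q"
  proof
    fix p assume p: "p \<in> Pairs K"
    obtain x y where xy: "p = (x, y)" by (cases p)
    have xyK: "x \<in> K" "y \<in> K" "x \<noteq> y" using p xy unfolding Pairs_def by auto
    obtain h where "h \<in> E" "cv vs x \<in> h" "cv vs y \<in> h" using adj[OF xyK] by blast
    then have "cv vs y \<in> ce es x \<or> cv vs x \<in> ce es y" using ptr[of x y h] xyK K by blast
    then show "p \<in> Q \<union> prod.swap ` Q"
    proof
      assume "cv vs y \<in> ce es x" then show ?thesis using p xy unfolding Q_def by auto
    next
      assume "cv vs x \<in> ce es y"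
      then have "(y, x) \<in> Q" using xyK unfolding Q_def Pairs_def by auto
      moreover have "prod.swap (y, x) = p" using xy by simp
      ultimately show ?thesis by (metis UnI2 image_eqI)
    qed
  qed
  then have "card (Pairs K) \<le> card (Q \<union> prod.swap ` Q)"
    using finK unfolding Q_def Pairs_def by (intro card_mono) auto
  also have "\<dots> \<le> card Q + card (prod.swap ` Q)" by (rule card_Un_le)
  also have "\<dots> \<le> 2 * card Q" using card_image_le[of Q prod.swap] finK unfolding Q_def Pairs_def
    by (simp add: finite_subset)
  finally have c1: "card (Pairs K) \<le> 2 * card Q" .
  have "inj_on fst Q"
  proof (rule inj_onI)
    fix p p' assume pp: "p \<in> Q" "p' \<in> Q" "fst p = fst p'"
    show "p = p'"
    proof (rule ccontr)
      assume ne: "p \<noteq> p'"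
      then have "snd p \<noteq> snd p'" using pp(3) by (metis prod.expand)
      moreover have "fst p \<in> K" "snd p \<in> K" "snd p' \<in> K" "fst p \<noteq> snd p" "fst p \<noteq> snd p'"
        "cv vs (snd p) \<in> ce es (fst p)" "cv vs (snd p') \<in> ce es (fst p)"
        using pp unfolding Q_def Pairs_def by auto
      ultimately show False using one_ptr[of "fst p" "snd p" "snd p'"] K by blast
    qed
  qed
  moreover have "fst ` Q \<subseteq> K" unfolding Q_def Pairs_def by auto
  ultimately have "card Q \<le> card K" using card_inj_on_le finK by blast
  then have "card K * card K - card K \<le> 2 * card K" using c1 card_Pairs[OF finK] by simp
  then have "card K * card K \<le> 3 * card K" by linarith
  then show ?thesis using mult_le_cancel2[of "card K" "card K" 3] by (cases "card K = 0") auto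
qed

end


context cycU begin

lemma Usub: "U \<subseteq> set vs" using us unfolding usable_def by blast

lemma cardK: "card {x \<in> {0..<L}. cv vs x \<in> U \<inter> S} = card (U \<inter> S)"
proof -
  have "card {x \<in> {0..<L}. cv vs (0 + x) \<in> U \<inter> S} = card (U \<inter> S \<inter> set vs)" by (rule card_N)
  moreover have "U \<inter> S \<inter> set vs = U \<inter> S" using Usub by auto
  ultimately show ?thesis by simp
qed

lemma sum_lower:
  assumes "\<And>p. p \<in> Pairs K \<Longrightarrow> c \<le> card (bridges vs es (fst p) (snd p))"
  shows "card (Pairs K) * c \<le> (\<Sum>p\<in>Pairs K. card (bridges vs es (fst p) (snd p)))"
proof -
  have "(\<Sum>p\<in>Pairs K. c) \<le> (\<Sum>p\<in>Pairs K. card (bridges vs es (fst p) (snd p)))"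
    using assms by (rule sum_mono)
  then show ?thesis by simp
qed

end

theorem lemma2p6:
  fixes V :: "'a set" and E :: "'a set set" and n :: nat
    and vs :: "'a list" and es :: "'a set list"
    and d0 \<gamma>1 \<gamma>2 :: real
  assumes d0: "d0 = 65" and g1: "\<gamma>1 = 18" and g2: "\<gamma>2 = 13"
    and n: "real n \<ge> d0 + 4"
    and H: "three_graph V E" and cardV: "card V = n"
    and ore: "\<And>u v. u \<in> V \<Longrightarrow> v \<in> V \<Longrightarrow> u \<noteq> v \<Longrightarrow> \<not> adjacent E u v \<Longrightarrow>
               real (deg V E u + deg V E v) \<ge> real n + d0"
    and C: "maximal_berge_cycle E vs es"
    and len: "length vs \<in> {n - 1, n - 2, n - 3}"
  shows "\<forall>u \<in> V - set vs. \<forall>U. usable E vs es u U \<and> real (card U) \<ge> real (degC V E vs u) / 6 \<longrightarrow>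
           card (U \<inter> classS V E vs n d0) \<le> 3 \<and>
           card (U \<inter> classB V E vs n d0) + 3 \<ge> card U \<and>
           (\<forall>i\<in>{0..<int (length vs)}. \<forall>j\<in>{0..<int (length vs)}.
              i \<noteq> j \<and> cv vs i \<in> U \<and> cv vs j \<in> U \<longrightarrow>
              int (card (bridges vs es i j)) \<ge>
                int (degC V E vs (cv vs i)) + int (degC V E vs (cv vs j)) - int (length vs) - 4) \<and>
           u \<in> classS' V E vs n \<gamma>1 \<and>
           card (U \<inter> classB' V E vs n \<gamma>2) \<le> 3"
proof (intro ballI allI impI)
  interpret cyc V E vs es using H C by (simp add: cyc_def)
  fix u U
  assume u: "u \<in> V - set vs" and A: "usable E vs es u U \<and> real (degC V E vs u) / 6 \<le> real (card U)"
  interpret cycU V E vs es u U using u A by unfold_locales auto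
  have n69: "n \<ge> 69" using n d0 by simp
  have lenb: "length vs + 1 \<le> n" "n \<le> length vs + 3" using len n69 by auto
  have lenI: "L + 1 \<le> int n" using lenb by linarith
  have finU: "finite U" using Usub finite_subset by blast
  have UV: "U \<subseteq> V" using Usub setvs_V by blast
  have degb: "deg V E v \<le> degC V E vs v + 3" for v using deg_bound[of v] cardV lenb by linarith
  define KS where "KS = {x \<in> {0..<L}. cv vs x \<in> U \<inter> classS V E vs n d0}"
  have pa: "card (U \<inter> classS V E vs n d0) \<le> 3"
  proof -
    have "card KS \<le> 3"
    proof (rule pointer_bound)
      show "KS \<subseteq> {0..<L}" unfolding KS_def by auto
      show "cv vs x \<in> U" if "x \<in> KS" for x using that unfolding KS_def by auto
      fix x y assume xy: "x \<in> KS" "y \<in> KS" "x \<noteq> y"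
      have ne: "cv vs x \<noteq> cv vs y" using cv_off_inj[of x y 0] xy unfolding KS_def by auto
      have xs: "cv vs x \<in> V" "real (degC V E vs (cv vs x)) < (real n + d0) / 2 - 3"
        "cv vs y \<in> V" "real (degC V E vs (cv vs y)) < (real n + d0) / 2 - 3"
        using xy unfolding KS_def classS_def by auto
      show "\<exists>h\<in>E. cv vs x \<in> h \<and> cv vs y \<in> h"
      proof (rule ccontr)
        assume "\<not> ?thesis"
        then have "\<not> adjacent E (cv vs x) (cv vs y)" unfolding adjacent_def edges_with_def by blast
        then have o: "real (deg V E (cv vs x) + deg V E (cv vs y)) \<ge> real n + d0" using ore xs ne by blast
        have "real (deg V E (cv vs x)) \<le> real (degC V E vs (cv vs x) + 3)" using degb of_nat_mono by blast
        moreover have "real (deg V E (cv vs y)) \<le> real (degC V E vs (cv vs y) + 3)" using degb of_nat_mono by blast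
        ultimately have "real (deg V E (cv vs x)) \<le> real (degC V E vs (cv vs x)) + 3"
             "real (deg V E (cv vs y)) \<le> real (degC V E vs (cv vs y)) + 3" by simp_all
        moreover have "real n + d0 \<le> real (deg V E (cv vs x)) + real (deg V E (cv vs y))" using o by simp
        ultimately show False using xs by (simp add: add_divide_distrib)
      qed
    qed
    then show ?thesis using cardK unfolding KS_def by simp
  qed
  have pb: "card (U \<inter> classB V E vs n d0) + 3 \<ge> card U"
  proof -
    have "U = (U \<inter> classS V E vs n d0) \<union> (U \<inter> classB V E vs n d0)"
      using UV unfolding classS_def classB_def by auto
    moreover have "(U \<inter> classS V E vs n d0) \<inter> (U \<inter> classB V E vs n d0) = {}"
      unfolding classS_def classB_def by auto
    ultimately have "card U = card (U \<inter> classS V E vs n d0) + card (U \<inter> classB V E vs n d0)"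
      using finU by (metis card_Un_disjoint finite_Int)
    then show ?thesis using pa by linarith
  qed
  have pc: "\<forall>i\<in>{0..<int (length vs)}. \<forall>j\<in>{0..<int (length vs)}.
              i \<noteq> j \<and> cv vs i \<in> U \<and> cv vs j \<in> U \<longrightarrow>
              int (card (bridges vs es i j)) \<ge>
                int (degC V E vs (cv vs i)) + int (degC V E vs (cv vs j)) - int (length vs) - 4"
    using part_c by blast
  define KB where "KB = {x \<in> {0..<L}. cv vs x \<in> U \<inter> classB V E vs n d0}"
  have pd: "u \<in> classS' V E vs n \<gamma>1"
  proof (rule ccontr)
    assume "u \<notin> classS' V E vs n \<gamma>1"
    then have du: "real (degC V E vs u) \<ge> real n / 4 + 18" using u g1 unfolding classS'_def by auto
    define m where "m = card KB"
    have mB: "m = card (U \<inter> classB V E vs n d0)" unfolding m_def KB_def by (rule cardK)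
    have "real m + 3 \<ge> real (card U)" using pb mB by linarith
    then have m24: "24 * real m \<ge> real n" using A du by linarith
    then have m3: "m \<ge> 3" using n69 by linarith
    have KBs: "KB \<subseteq> {0..<L}" "\<And>x. x \<in> KB \<Longrightarrow> cv vs x \<in> U" unfolding KB_def by auto
    have pl: "56 \<le> card (bridges vs es (fst p) (snd p))" if p: "p \<in> Pairs KB" for p
    proof -
      have pk: "fst p \<in> KB" "snd p \<in> KB" "fst p \<noteq> snd p" using p unfolding Pairs_def by auto
      then have dd: "real (degC V E vs (cv vs (fst p))) \<ge> (real n + d0) / 2 - 3"
        "real (degC V E vs (cv vs (snd p))) \<ge> (real n + d0) / 2 - 3" unfolding KB_def classB_def by auto
      have "int (card (bridges vs es (fst p) (snd p))) \<ge>
          int (degC V E vs (cv vs (fst p))) + int (degC V E vs (cv vs (snd p))) - L - 4"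
      proof -
        have "fst p \<in> {0..<L}" "snd p \<in> {0..<L}" using pk KBs by auto
        then show ?thesis using part_c[of "fst p" "snd p"] pk KBs(2) by blast
      qed
      moreover have "int (degC V E vs (cv vs (fst p))) + int (degC V E vs (cv vs (snd p))) \<ge> int n + 59"
      proof -
        have "real (degC V E vs (cv vs (fst p))) + real (degC V E vs (cv vs (snd p))) \<ge> real n + 59"
          using dd d0 by (simp add: add_divide_distrib)
        then show ?thesis by linarith
      qed
      ultimately show ?thesis using lenb by linarith
    qed
    have s1: "card (Pairs KB) * 56 \<le> (\<Sum>p\<in>Pairs KB. card (bridges vs es (fst p) (snd p)))"
      by (rule sum_lower) (rule pl)
    have s2: "(\<Sum>p\<in>Pairs KB. card (bridges vs es (fst p) (snd p))) \<le> 2 * (card KB - 1) * length vs"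
      by (rule pair_sum_upper) (use KBs in auto)
    have "card (Pairs KB) * 56 \<le> 2 * (m - 1) * length vs"
      using s1 s2 unfolding m_def by linarith
    moreover have "card (Pairs KB) = m * m - m" using card_Pairs KBs(1) finite_subset unfolding m_def
      by (metis finite_atLeastLessThan_int)
    ultimately have "(m - 1) * (56 * m) \<le> (m - 1) * (2 * length vs)"
      by (simp add: algebra_simps diff_mult_distrib)
    then have "56 * m \<le> 2 * length vs" using m3 by simp
    then show False using m24 lenb by linarith
  qed
  define KB' where "KB' = {x \<in> {0..<L}. cv vs x \<in> U \<inter> classB' V E vs n \<gamma>2}"
  have pe: "card (U \<inter> classB' V E vs n \<gamma>2) \<le> 3"
  proof (rule ccontr)
    assume "\<not> ?thesis"
    define m where "m = card KB'"
    have mB: "m = card (U \<inter> classB' V E vs n \<gamma>2)" unfolding m_def KB'_def by (rule cardK)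
    then have m4: "m \<ge> 4" using \<open>\<not> _\<close> by simp
    have KBs: "KB' \<subseteq> {0..<L}" "\<And>x. x \<in> KB' \<Longrightarrow> cv vs x \<in> U" unfolding KB'_def by auto
    have pl: "n div 2 + 23 \<le> card (bridges vs es (fst p) (snd p))" if p: "p \<in> Pairs KB'" for p
    proof -
      have pk: "fst p \<in> KB'" "snd p \<in> KB'" "fst p \<noteq> snd p" using p unfolding Pairs_def by auto
      then have dd: "real (degC V E vs (cv vs (fst p))) \<ge> 3 * real n / 4 + \<gamma>2"
        "real (degC V E vs (cv vs (snd p))) \<ge> 3 * real n / 4 + \<gamma>2" unfolding KB'_def classB'_def by auto
      have "int (card (bridges vs es (fst p) (snd p))) \<ge>
          int (degC V E vs (cv vs (fst p))) + int (degC V E vs (cv vs (snd p))) - L - 4"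
      proof -
        have "fst p \<in> {0..<L}" "snd p \<in> {0..<L}" using pk KBs by auto
        then show ?thesis using part_c[of "fst p" "snd p"] pk KBs(2) by blast
      qed
      moreover have "2 * (int (degC V E vs (cv vs (fst p))) + int (degC V E vs (cv vs (snd p)))) \<ge> 3 * int n + 52"
      proof -
        have "2 * (real (degC V E vs (cv vs (fst p))) + real (degC V E vs (cv vs (snd p)))) \<ge> 3 * real n + 52"
          using dd g2 by (simp add: add_divide_distrib)
        then have "real (3 * n + 52) \<le> real (2 * (degC V E vs (cv vs (fst p)) + degC V E vs (cv vs (snd p))))"
          by simp
        then have "3 * n + 52 \<le> 2 * (degC V E vs (cv vs (fst p)) + degC V E vs (cv vs (snd p)))"
          by (simp only: of_nat_le_iff)
        then have "int (3 * n + 52) \<le> int (2 * (degC V E vs (cv vs (fst p)) + degC V E vs (cv vs (snd p))))"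
          by (simp only: of_nat_le_iff)
        then show ?thesis by simp
      qed
      ultimately have "2 * int (card (bridges vs es (fst p) (snd p))) \<ge> int n + 46" using lenI
        by (simp only: distrib_left)
      then show ?thesis by linarith
    qed
    have s1: "card (Pairs KB') * (n div 2 + 23) \<le> (\<Sum>p\<in>Pairs KB'. card (bridges vs es (fst p) (snd p)))"
      by (rule sum_lower) (rule pl)
    have s2: "(\<Sum>p\<in>Pairs KB'. card (bridges vs es (fst p) (snd p))) \<le> 2 * (card KB' - 1) * length vs"
      by (rule pair_sum_upper) (use KBs in auto)
    have s: "card (Pairs KB') * (n div 2 + 23) \<le> 2 * (m - 1) * length vs"
      using s1 s2 unfolding m_def by linarith
    moreover have "card (Pairs KB') = m * m - m" using card_Pairs KBs(1) finite_subset unfolding m_def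
      by (metis finite_atLeastLessThan_int)
    ultimately have "(m - 1) * (m * (n div 2 + 23)) \<le> (m - 1) * (2 * length vs)"
      by (simp add: algebra_simps diff_mult_distrib)
    then have "m * (n div 2 + 23) \<le> 2 * length vs" using m4 by simp
    moreover have "4 * (n div 2) + 92 \<le> m * (n div 2 + 23)" using mult_le_mono1[OF m4, of "n div 2 + 23"] by simp
    moreover have "n \<le> 2 * (n div 2) + 1" by presburger
    ultimately show False using lenb by linarith
  qed
  show "card (U \<inter> classS V E vs n d0) \<le> 3 \<and>
           card (U \<inter> classB V E vs n d0) + 3 \<ge> card U \<and>
           (\<forall>i\<in>{0..<int (length vs)}. \<forall>j\<in>{0..<int (length vs)}.
              i \<noteq> j \<and> cv vs i \<in> U \<and> cv vs j \<in> U \<longrightarrow>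
              int (card (bridges vs es i j)) \<ge>
                int (degC V E vs (cv vs i)) + int (degC V E vs (cv vs j)) - int (length vs) - 4) \<and>
           u \<in> classS' V E vs n \<gamma>1 \<and>
           card (U \<inter> classB' V E vs n \<gamma>2) \<le> 3"
    using pa pb pc pd pe by blast
qed


end
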